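(* Assume Assumptions 1, 2, 3 (stated in the context). Every call of Line-Search (Algorithm 3) made by Algorithm 1 (both described in the context), started from a feasible $\theta$, makes finitely many calls to subdivision, i.e. terminates finitely.
   Context: Problem: for $\theta$ and $t\in[0,T]$, body $i$ occupies $b_i(t,\theta)\subset\mathbb{R}^3$, obstacles occupy $o$; $\text{dist}$ is the shortest Euclidean distance between sets; $d_0\ge0$; $\mathcal{O}(\theta)$ twice differentiable cost; SIP: minimize $\mathcal{O}$ s.t. $\text{dist}(b_i(t,\theta),o)\ge d_0$ for all $i,t$ ($\theta$ feasible if all constraints hold). Assumption 1: finite decompositions $b_i=\bigcup_j b_{ij}$, $o=\bigcup_k o_k$ with each $(t,\theta)\mapsto\text{dist}(b_{ij}(t,\theta),o_k)$ sufficiently smooth. Assumption 2: the feasible domain of $t,\theta$ is bounded. Assumption 3: $\mathcal{P}$ sufficiently smooth, monotonically decreasing on $(0,\infty)$, $\lim_{x\to0}\mathcal{P}=\infty$, $\lim_{x\to\infty}\mathcal{P}=0$, $\lim_{x\to0}x\mathcal{P}(x)=\infty$. $L_1$: a constant with $|\text{dist}(b_{ij}(t_1,\theta),o_k)-\text{dist}(b_{ij}(t_2,\theta),o_k)|\le L_1|t_1-t_2|$ for all arguments. $\mathcal{P}_{ijk}(t,\theta)=\mathcal{P}(\text{dist}(b_{ij}(t,\theta),o_k)-d_0)$; per triple a finite partition of $[0,T]$ into intervals $[T_0^l,T_1^l]$; subdividing $(i,j,k,l)$ replaces the interval by its two halves; $\mathcal{P}_{ijkl}(\theta)=\mathcal{P}_{ijk}((T_0^l+T_1^l)/2,\theta)$;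 $\mathcal{E}=\mathcal{O}+\mu\sum_{ijkl}(T_1^l-T_0^l)\mathcal{P}_{ijkl}$, $\mu>0$. Directions $d^{(1)}=-\nabla_\theta\mathcal{E}$ or $d^{(2)}=\mathcal{M}(\nabla^2_\theta\mathcal{E})^{-1}d^{(1)}$ with $\underline\beta I\preceq\mathcal{M}(H)\preceq\bar\beta I$. Wolfe: $\mathcal{E}(\theta+d\alpha)\le\mathcal{E}(\theta)+c\langle d\alpha,\nabla\mathcal{E}\rangle$, $c\in(0,1)$. Safety check at $\theta$: $\psi(x)=L_1x/2+L_2x^\eta$ ($L_2,\eta>0$); return a tuple $(i,j,k,l)$ with $\text{dist}(b_{ij}((T_0^l+T_1^l)/2,\theta),o_k)\le d_0+\psi(T_1^l-T_0^l)$ if one exists, else None. Line-Search$(\theta,d,\epsilon_\alpha)$ (Algorithm 3; $\alpha_0>0,\gamma\in(0,1)$): $\alpha=\alpha_0$; while $\theta+d\alpha$ fails the safety check or Wolfe: if the check returned $(i,j,k,l)$, then if $\alpha\le\epsilon_\alpha$: $\epsilon_\alpha\leftarrow\gamma\epsilon_\alpha$, subdivide $(i,j,k,l)$, re-evaluate $\mathcal{E}$, recompute $d$; else $\alpha\leftarrow\gamma\alpha$; if only Wolfe fails, $\alpha\leftarrow\gamma\alpha$. Return $\alpha,\epsilon_\alpha$. Algorithm 1: input feasible $\theta$, $\mu$, $\epsilon_\alpha,\epsilon_d,\epsilon_\mu>0$, $\gamma\in(0,1)$; while $\mu>\epsilon_\mu$: compute $d$; while $\|d\|_\infty>\epsilon_d$: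 $(\alpha,\epsilon_\alpha)\leftarrow$Line-Search$(\theta,d,\epsilon_\alpha)$, $\theta\leftarrow\theta+d\alpha$, recompute $d$; $\mu\leftarrow\gamma\mu$. Return $\theta$. *)

theory Defs
  imports "HOL-Analysis.Analysis"
begin

definition twice_differentiable_on ::
  "'a::euclidean_space set \<Rightarrow> ('a \<Rightarrow> real) \<Rightarrow> bool" where
  "twice_differentiable_on S f \<longleftrightarrow>
     (\<exists>(f' :: 'a \<Rightarrow> ('a \<Rightarrow>\<^sub>L real)) (f'' :: 'a \<Rightarrow> ('a \<Rightarrow>\<^sub>L ('a \<Rightarrow>\<^sub>L real))).
        (\<forall>x\<in>S. (f has_derivative blinfun_apply (f' x)) (at x)) \<and>
        (\<forall>x\<in>S. (f' has_derivative blinfun_apply (f'' x)) (at x)))"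

definition C2_on :: "'a::euclidean_space set \<Rightarrow> ('a \<Rightarrow> real) \<Rightarrow> bool" where
  "C2_on S f \<longleftrightarrow>
     (\<exists>(f' :: 'a \<Rightarrow> ('a \<Rightarrow>\<^sub>L real)) (f'' :: 'a \<Rightarrow> ('a \<Rightarrow>\<^sub>L ('a \<Rightarrow>\<^sub>L real))).
        (\<forall>x\<in>S. (f has_derivative blinfun_apply (f' x)) (at x)) \<and>
        (\<forall>x\<in>S. (f' has_derivative blinfun_apply (f'' x)) (at x)) \<and>
        continuous_on S f'')"

definition grad :: "(real^'n \<Rightarrow> real) \<Rightarrow> real^'n \<Rightarrow> real^'n" where
  "grad f x = (SOME g. (f has_derivative (\<lambda>h. g \<bullet> h)) (at x))"

definition hess :: "(real^'n \<Rightarrow> real) \<Rightarrow> real^'n \<Rightarrow> real^'n^'n" where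
  "hess f x = (SOME H. (grad f has_derivative (\<lambda>h. H *v h)) (at x))"

text \<open>A partition of [0,T] is represented by its finite set of breakpoints
  (containing 0 and T); its intervals [T0,T1] are the pairs of consecutive
  breakpoints. A partition state assigns such a set to every triple p = (i,j,k).
  A tuple (i,j,k,l) is represented as (p,(T0,T1)).\<close>

type_synonym 'p partition_state = "'p \<Rightarrow> real set"

definition is_partition :: "real \<Rightarrow> real set \<Rightarrow> bool" where
  "is_partition T X \<longleftrightarrow> finite X \<and> 0 \<in> X \<and> T \<in> X \<and> X \<subseteq> {0..T}"

definition intervals :: "real set \<Rightarrow> (real \<times> real) set" where
  "intervals X = {(a,b). a \<in> X \<and> b \<in> X \<and> a < b \<and> {a<..<b} \<inter> X = {}}"

definition subdivide :: "'p partition_state \<Rightarrow> 'p \<times> (real \<times> real) \<Rightarrow> 'p partition_state" where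
  "subdivide Q tp = Q(fst tp := insert ((fst (snd tp) + snd (snd tp)) / 2) (Q (fst tp)))"

text \<open>Dist p t \<theta> = dist(b_ij(t,\<theta>), o_k) for p = (i,j,k).\<close>

definition energy ::
  "(real^'n \<Rightarrow> real) \<Rightarrow> (real \<Rightarrow> real) \<Rightarrow> ('p \<Rightarrow> real \<Rightarrow> real^'n \<Rightarrow> real) \<Rightarrow> 'p set \<Rightarrow> real
   \<Rightarrow> real \<Rightarrow> 'p partition_state \<Rightarrow> real^'n \<Rightarrow> real" where
  "energy Obj Pen Dist Trip d0 \<mu> Q \<theta> =
     Obj \<theta> + \<mu> * (\<Sum>p\<in>Trip. \<Sum>(a,b)\<in>intervals (Q p). (b - a) * Pen (Dist p ((a + b) / 2) \<theta> - d0))"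

definition directions ::
  "(real^'n^'n \<Rightarrow> real^'n^'n) \<Rightarrow> (real^'n \<Rightarrow> real) \<Rightarrow> real^'n \<Rightarrow> (real^'n) set" where
  "directions M E \<theta> = {- grad E \<theta>, matrix_inv (M (hess E \<theta>)) *v (- grad E \<theta>)}"

definition psi :: "real \<Rightarrow> real \<Rightarrow> real \<Rightarrow> real \<Rightarrow> real" where
  "psi L1 L2 \<eta> x = L1 * x / 2 + L2 * x powr \<eta>"

text \<open>Tuples the safety check may return at \<theta> (it returns None iff this set is empty).\<close>
definition unsafe_tuples ::
  "('p \<Rightarrow> real \<Rightarrow> real^'n \<Rightarrow> real) \<Rightarrow> 'p set \<Rightarrow> real \<Rightarrow> real \<Rightarrow> real \<Rightarrow> real
   \<Rightarrow> 'p partition_state \<Rightarrow> real^'n \<Rightarrow> ('p \<times> (real \<times> real)) set" where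
  "unsafe_tuples Dist Trip d0 L1 L2 \<eta> Q \<theta> =
     {(p,(a,b)). p \<in> Trip \<and> (a,b) \<in> intervals (Q p) \<and>
        Dist p ((a + b) / 2) \<theta> \<le> d0 + psi L1 L2 \<eta> (b - a)}"

definition wolfe :: "(real^'n \<Rightarrow> real) \<Rightarrow> real \<Rightarrow> real^'n \<Rightarrow> real^'n \<Rightarrow> real \<Rightarrow> bool" where
  "wolfe E c \<theta> d \<alpha> \<longleftrightarrow> E (\<theta> + \<alpha> *\<^sub>R d) \<le> E \<theta> + c * ((\<alpha> *\<^sub>R d) \<bullet> grad E \<theta>)"

text \<open>State of Line-Search: (partition state, eps_alpha, alpha, d). Parameters:
  Obj Pen Dist Trip d0 L1 L2 eta M c gamma mu theta.\<close>

definition ls_continue ::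
  "(real^'n \<Rightarrow> real) \<Rightarrow> (real \<Rightarrow> real) \<Rightarrow> ('p \<Rightarrow> real \<Rightarrow> real^'n \<Rightarrow> real) \<Rightarrow> 'p set \<Rightarrow> real
   \<Rightarrow> real \<Rightarrow> real \<Rightarrow> real \<Rightarrow> real \<Rightarrow> real \<Rightarrow> real^'n
   \<Rightarrow> 'p partition_state \<times> real \<times> real \<times> (real^'n) \<Rightarrow> bool" where
  "ls_continue Obj Pen Dist Trip d0 L1 L2 \<eta> c \<mu> \<theta> s =
     (case s of (Q, \<epsilon>, \<alpha>, d) \<Rightarrow>
        unsafe_tuples Dist Trip d0 L1 L2 \<eta> Q (\<theta> + \<alpha> *\<^sub>R d) \<noteq> {} \<or>
        \<not> wolfe (energy Obj Pen Dist Trip d0 \<mu> Q) c \<theta> d \<alpha>)"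

text \<open>One iteration of the while loop; the boolean label is True iff the
  iteration performs a subdivision. The choice of the returned tuple and of the
  direction (d1 or d2) is left nondeterministic.\<close>

definition ls_step ::
  "(real^'n \<Rightarrow> real) \<Rightarrow> (real \<Rightarrow> real) \<Rightarrow> ('p \<Rightarrow> real \<Rightarrow> real^'n \<Rightarrow> real) \<Rightarrow> 'p set \<Rightarrow> real
   \<Rightarrow> real \<Rightarrow> real \<Rightarrow> real \<Rightarrow> (real^'n^'n \<Rightarrow> real^'n^'n) \<Rightarrow> real \<Rightarrow> real \<Rightarrow> real \<Rightarrow> real^'n
   \<Rightarrow> 'p partition_state \<times> real \<times> real \<times> (real^'n) \<Rightarrow> bool
   \<Rightarrow> 'p partition_state \<times> real \<times> real \<times> (real^'n) \<Rightarrow> bool" where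
  "ls_step Obj Pen Dist Trip d0 L1 L2 \<eta> M c \<gamma> \<mu> \<theta> s sub s' \<longleftrightarrow>
     ls_continue Obj Pen Dist Trip d0 L1 L2 \<eta> c \<mu> \<theta> s \<and>
     (case s of (Q, \<epsilon>, \<alpha>, d) \<Rightarrow>
        (\<exists>tp \<in> unsafe_tuples Dist Trip d0 L1 L2 \<eta> Q (\<theta> + \<alpha> *\<^sub>R d).
            (\<alpha> \<le> \<epsilon> \<and> sub \<and>
               (\<exists>d'. d' \<in> directions M (energy Obj Pen Dist Trip d0 \<mu> (subdivide Q tp)) \<theta> \<and>
                     s' = (subdivide Q tp, \<gamma> * \<epsilon>, \<alpha>, d'))) \<or>
            (\<not> \<alpha> \<le> \<epsilon> \<and> \<not> sub \<and> s' = (Q, \<epsilon>, \<gamma> * \<alpha>, d))) \<or>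
        (unsafe_tuples Dist Trip d0 L1 L2 \<eta> Q (\<theta> + \<alpha> *\<^sub>R d) = {} \<and> \<not> sub \<and>
            s' = (Q, \<epsilon>, \<gamma> * \<alpha>, d)))"

datatype ('p, 'n) alg_state =
    Outer "real^'n" real "'p partition_state" real   \<comment> \<open>head of the outer while loop: theta, mu, partition, eps_alpha\<close>
  | Inner "real^'n" real "'p partition_state" real "real^'n" \<comment> \<open>head of the inner while loop: ..., d\<close>

text \<open>A Line-Search call is made
  from a reachable Inner state whose d has infinity norm > eps_d; the algorithm continues
  after the call only if that call terminated.\<close>

inductive alg_reach ::
  "(real^'n \<Rightarrow> real) \<Rightarrow> (real \<Rightarrow> real) \<Rightarrow> ('p \<Rightarrow> real \<Rightarrow> real^'n \<Rightarrow> real) \<Rightarrow> 'p set \<Rightarrow> real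
   \<Rightarrow> real \<Rightarrow> real \<Rightarrow> real \<Rightarrow> (real^'n^'n \<Rightarrow> real^'n^'n) \<Rightarrow> real \<Rightarrow> real \<Rightarrow> real
   \<Rightarrow> real \<Rightarrow> real \<Rightarrow> real \<Rightarrow> real^'n \<Rightarrow> real \<Rightarrow> 'p partition_state \<Rightarrow> real
   \<Rightarrow> ('p, 'n) alg_state \<Rightarrow> bool"
  for Obj Pen Dist Trip d0 L1 L2 \<eta> M c \<gamma>ls \<alpha>0 \<gamma> \<epsilon>d \<epsilon>\<mu> \<theta>0 \<mu>0 Q0 \<epsilon>\<alpha>0
  where
  start: "alg_reach Obj Pen Dist Trip d0 L1 L2 \<eta> M c \<gamma>ls \<alpha>0 \<gamma> \<epsilon>d \<epsilon>\<mu> \<theta>0 \<mu>0 Q0 \<epsilon>\<alpha>0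
            (Outer \<theta>0 \<mu>0 Q0 \<epsilon>\<alpha>0)"
| outer: "alg_reach Obj Pen Dist Trip d0 L1 L2 \<eta> M c \<gamma>ls \<alpha>0 \<gamma> \<epsilon>d \<epsilon>\<mu> \<theta>0 \<mu>0 Q0 \<epsilon>\<alpha>0
            (Outer \<theta> \<mu> Q \<epsilon>) \<Longrightarrow> \<mu> > \<epsilon>\<mu> \<Longrightarrow>
          d \<in> directions M (energy Obj Pen Dist Trip d0 \<mu> Q) \<theta> \<Longrightarrow>
          alg_reach Obj Pen Dist Trip d0 L1 L2 \<eta> M c \<gamma>ls \<alpha>0 \<gamma> \<epsilon>d \<epsilon>\<mu> \<theta>0 \<mu>0 Q0 \<epsilon>\<alpha>0
            (Inner \<theta> \<mu> Q \<epsilon> d)"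
| inner_exit: "alg_reach Obj Pen Dist Trip d0 L1 L2 \<eta> M c \<gamma>ls \<alpha>0 \<gamma> \<epsilon>d \<epsilon>\<mu> \<theta>0 \<mu>0 Q0 \<epsilon>\<alpha>0
            (Inner \<theta> \<mu> Q \<epsilon> d) \<Longrightarrow> infnorm d \<le> \<epsilon>d \<Longrightarrow>
          alg_reach Obj Pen Dist Trip d0 L1 L2 \<eta> M c \<gamma>ls \<alpha>0 \<gamma> \<epsilon>d \<epsilon>\<mu> \<theta>0 \<mu>0 Q0 \<epsilon>\<alpha>0
            (Outer \<theta> (\<gamma> * \<mu>) Q \<epsilon>)"
| inner_step: "alg_reach Obj Pen Dist Trip d0 L1 L2 \<eta> M c \<gamma>ls \<alpha>0 \<gamma> \<epsilon>d \<epsilon>\<mu> \<theta>0 \<mu>0 Q0 \<epsilon>\<alpha>0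
            (Inner \<theta> \<mu> Q \<epsilon> d) \<Longrightarrow> infnorm d > \<epsilon>d \<Longrightarrow>
          (\<lambda>s s'. \<exists>sub. ls_step Obj Pen Dist Trip d0 L1 L2 \<eta> M c \<gamma>ls \<mu> \<theta> s sub s')\<^sup>*\<^sup>*
            (Q, \<epsilon>, \<alpha>0, d) (Q', \<epsilon>', \<alpha>, d') \<Longrightarrow>
          \<not> ls_continue Obj Pen Dist Trip d0 L1 L2 \<eta> c \<mu> \<theta> (Q', \<epsilon>', \<alpha>, d') \<Longrightarrow>
          d'' \<in> directions M (energy Obj Pen Dist Trip d0 \<mu> Q') (\<theta> + \<alpha> *\<^sub>R d') \<Longrightarrow>
          alg_reach Obj Pen Dist Trip d0 L1 L2 \<eta> M c \<gamma>ls \<alpha>0 \<gamma> \<epsilon>d \<epsilon>\<mu> \<theta>0 \<mu>0 Q0 \<epsilon>\<alpha>0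
            (Inner (\<theta> + \<alpha> *\<^sub>R d') \<mu> Q' \<epsilon>' d'')"

end

theory Submission
  imports Defs
begin


lemma grad_props:
  fixes E :: "real^'n \<Rightarrow> real"
  assumes d: "(E has_derivative E') (at x)"
  shows "(E has_derivative (\<lambda>h. grad E x \<bullet> h)) (at x)" "\<And>h. grad E x \<bullet> h = E' h"
proof -
  have lin: "linear E'" using d has_derivative_linear by blast
  define g where "g = (\<Sum>i\<in>Basis. E' i *\<^sub>R i)"
  have gh: "g \<bullet> h = E' h" for h
  proof -
    have "g \<bullet> h = (\<Sum>i\<in>Basis. (h \<bullet> i) * E' i)"
      unfolding g_def inner_sum_left by (simp add: inner_commute mult.commute)
    also have "\<dots> = E' (\<Sum>i\<in>Basis. (h \<bullet> i) *\<^sub>R i)"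
      by (simp add: linear_sum[OF lin] linear_scale[OF lin])
    also have "\<dots> = E' h" by (simp add: euclidean_representation)
    finally show ?thesis .
  qed
  have "(\<lambda>h. g \<bullet> h) = E'" using gh by auto
  hence ex: "(E has_derivative (\<lambda>h. g \<bullet> h)) (at x)" using d by simp
  show D: "(E has_derivative (\<lambda>h. grad E x \<bullet> h)) (at x)"
    unfolding grad_def by (rule someI[of "\<lambda>g. (E has_derivative (\<lambda>h. g \<bullet> h)) (at x)", OF ex])
  have "(\<lambda>h. grad E x \<bullet> h) = E'" using has_derivative_unique[OF D d] .
  thus "\<And>h. grad E x \<bullet> h = E' h" by metis
qed



lemma mvneg: "(A::real^'n^'m) *v (- x) = - (A *v x)"
  by (simp add: vec_eq_iff matrix_vector_mult_def sum_negf)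

lemma dir_props:
  fixes M :: "real^'n^'n \<Rightarrow> real^'n^'n" and E :: "real^'n \<Rightarrow> real"
  assumes Mb: "\<forall>H x. \<beta>l * (x \<bullet> x) \<le> x \<bullet> (M H *v x)" and bl: "0 < \<beta>l"
    and dd: "d \<in> directions M E \<theta>" and gK: "norm (grad E \<theta>) \<le> K"
  shows "norm d \<le> K + K / \<beta>l" "d \<noteq> 0 \<Longrightarrow> d \<bullet> grad E \<theta> < 0"
proof -
  define g where "g = grad E \<theta>"
  define A where "A = M (hess E \<theta>)"
  have K0: "0 \<le> K" using gK norm_ge_zero order_trans by blast
  have pd: "\<beta>l * (x \<bullet> x) \<le> x \<bullet> (A *v x)" for x using Mb A_def by blast
  have ker: "\<forall>x. A *v x = 0 \<longrightarrow> x = 0"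
  proof (intro allI impI)
    fix x assume "A *v x = 0"
    hence "\<beta>l * (x \<bullet> x) \<le> 0" using pd[of x] by simp
    hence "x \<bullet> x \<le> 0" using bl by (simp add: mult_le_0_iff)
    thus "x = 0" by (metis inner_eq_zero_iff inner_ge_zero order_antisym)
  qed
  then obtain B where "B ** A = mat 1" using matrix_left_invertible_ker by blast
  hence "A ** B = mat 1 \<and> B ** A = mat 1" using matrix_left_right_inverse by blast
  hence "A ** matrix_inv A = mat 1 \<and> matrix_inv A ** A = mat 1"
    unfolding matrix_inv_def by (rule someI)
  hence AB: "A ** matrix_inv A = mat 1" by blast
  define y where "y = matrix_inv A *v g"
  have Ay: "A *v y = g" unfolding y_def by (simp add: matrix_vector_mul_assoc AB)
  have ybound: "\<beta>l * norm y \<le> norm g"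
  proof (cases "y = 0")
    case True thus ?thesis by simp
  next
    case False
    have "\<beta>l * (norm y * norm y) \<le> y \<bullet> g" using pd[of y] Ay by (simp add: dot_square_norm power2_eq_square)
    also have "\<dots> \<le> norm y * norm g" by (rule Cauchy_Schwarz_ineq2[THEN order_trans[OF abs_ge_self]])
    finally have "norm y * (\<beta>l * norm y) \<le> norm y * norm g" by (simp add: algebra_simps)
    thus ?thesis using False by simp
  qed
  have dcases: "d = - g \<or> d = - y" using dd unfolding directions_def g_def y_def A_def
    by (auto simp: mvneg)
  show "norm d \<le> K + K / \<beta>l"
  proof -
    have "\<beta>l * norm y \<le> K" using ybound gK unfolding g_def by linarith
    hence "norm y \<le> K / \<beta>l" using bl by (simp add: field_simps)
    moreover have "0 \<le> K / \<beta>l" using K0 bl by simp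
    ultimately show ?thesis using dcases gK K0 unfolding g_def by auto
  qed
  show "d \<noteq> 0 \<Longrightarrow> d \<bullet> grad E \<theta> < 0"
  proof -
    assume dn: "d \<noteq> 0"
    show ?thesis
    proof (cases "d = - g")
      case True
      hence "g \<noteq> 0" using dn by auto
      thus ?thesis using True unfolding g_def by simp
    next
      case False
      hence dy: "d = - y" using dcases by blast
      hence yn: "y \<noteq> 0" using dn by auto
      have "0 < \<beta>l * (y \<bullet> y)" using yn bl by simp
      also have "\<dots> \<le> y \<bullet> g" using pd[of y] Ay by simp
      finally show ?thesis using dy unfolding g_def by simp
    qed
  qed
qed

lemma wolfe_small:
  fixes E :: "real^'n \<Rightarrow> real"
  assumes D: "(E has_derivative (\<lambda>h. g \<bullet> h)) (at \<theta>)" and desc: "d \<noteq> 0 \<Longrightarrow> d \<bullet> g < 0"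
    and c: "c < 1"
  shows "\<exists>a0>0. \<forall>\<alpha>. 0 < \<alpha> \<longrightarrow> \<alpha> < a0 \<longrightarrow> E (\<theta> + \<alpha> *\<^sub>R d) \<le> E \<theta> + c * ((\<alpha> *\<^sub>R d) \<bullet> g)"
proof (cases "d = 0")
  case True thus ?thesis by (intro exI[of _ 1]) simp
next
  case False
  define D0 where "D0 = d \<bullet> g"
  have D0n: "D0 < 0" using desc False D0_def by simp
  define f where "f = (\<lambda>\<alpha>::real. E (\<theta> + \<alpha> *\<^sub>R d))"
  have l: "((\<lambda>\<alpha>::real. \<theta> + \<alpha> *\<^sub>R d) has_derivative (\<lambda>\<alpha>. \<alpha> *\<^sub>R d)) (at 0)"
    by (auto intro!: derivative_eq_intros)
  have D': "(E has_derivative (\<lambda>h. g \<bullet> h)) (at (\<theta> + 0 *\<^sub>R d))" using D by simp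
  have "(f has_derivative (\<lambda>\<alpha>. g \<bullet> (\<alpha> *\<^sub>R d))) (at 0)"
    unfolding f_def by (rule has_derivative_compose[OF l D'])
  hence "(f has_derivative (\<lambda>\<alpha>. \<alpha> * D0)) (at 0)" by (simp add: D0_def inner_commute)
  moreover have "(\<lambda>\<alpha>. \<alpha> * D0) = (*) D0" by (auto simp: fun_eq_iff)
  ultimately have "(f has_field_derivative D0) (at 0)" by (simp add: has_field_derivative_def)
  hence "((\<lambda>h. (f (0 + h) - f 0) / h) \<longlongrightarrow> D0) (at 0)" by (simp add: DERIV_def)
  moreover have "D0 < c * D0" using D0n c by (simp add: mult_less_cancel_right_disj)
  ultimately have "\<forall>\<^sub>F h in at 0. (f (0 + h) - f 0) / h < c * D0" by (rule order_tendstoD(2))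
  then obtain a0 where a0: "a0 > 0" "\<forall>h. h \<noteq> 0 \<and> dist h 0 < a0 \<longrightarrow> (f h - f 0) / h < c * D0"
    unfolding eventually_at by auto
  show ?thesis
  proof (intro exI[of _ a0] conjI allI impI a0(1))
    fix \<alpha> :: real assume "0 < \<alpha>" "\<alpha> < a0"
    hence "(f \<alpha> - f 0) / \<alpha> < c * D0" using a0(2) by auto
    hence "f \<alpha> - f 0 < c * D0 * \<alpha>" using \<open>0 < \<alpha>\<close> by (simp add: divide_less_eq)
    thus "E (\<theta> + \<alpha> *\<^sub>R d) \<le> E \<theta> + c * ((\<alpha> *\<^sub>R d) \<bullet> g)"
      unfolding f_def D0_def by (simp add: algebra_simps)
  qed
qed



lemma intervals_sub: "intervals X \<subseteq> X \<times> X"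
  unfolding intervals_def by auto

lemma intervals_finite: "finite X \<Longrightarrow> finite (intervals X)"
  using intervals_sub finite_subset by (metis finite_SigmaI)

lemma intervals_memD: "(a,b) \<in> intervals X \<Longrightarrow> a \<in> X \<and> b \<in> X \<and> a < b \<and> (\<forall>x\<in>X. \<not> (a < x \<and> x < b))"
  unfolding intervals_def by auto

lemma intervals_memI: "a \<in> X \<Longrightarrow> b \<in> X \<Longrightarrow> a < b \<Longrightarrow> (\<forall>x\<in>X. \<not> (a < x \<and> x < b)) \<Longrightarrow> (a,b) \<in> intervals X"
  unfolding intervals_def by auto

lemma succ_interval:
  assumes fin: "finite X" and a: "a \<in> X" and v: "v \<in> X" "a < v"
  shows "(a, Min {x\<in>X. a < x}) \<in> intervals X" "Min {x\<in>X. a < x} \<le> v"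
proof -
  have ne: "{x\<in>X. a < x} \<noteq> {}" using v by auto
  have f: "finite {x\<in>X. a < x}" using fin by auto
  have m: "Min {x\<in>X. a < x} \<in> {x\<in>X. a < x}" using Min_in[OF f ne] .
  show "(a, Min {x\<in>X. a < x}) \<in> intervals X"
    apply (rule intervals_memI)
    using a m Min_le[OF f] by force+
  show "Min {x\<in>X. a < x} \<le> v" using Min_le[OF f] v by auto
qed

lemma intervals_cover:
  assumes fin: "finite X" and u: "u \<in> X" and v: "v \<in> X" and uv: "u < v" and t: "u \<le> t" "t \<le> v"
  shows "\<exists>a b. (a,b) \<in> intervals X \<and> a \<le> t \<and> t \<le> b"
proof -
  define S where "S = {x\<in>X. x \<le> t \<and> x < v}"
  have fS: "finite S" using fin S_def by auto
  have neS: "S \<noteq> {}" using u t uv S_def by auto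
  define a where "a = Max S"
  have aS: "a \<in> S" using Max_in[OF fS neS] a_def by simp
  hence aX: "a \<in> X" and at: "a \<le> t" and av: "a < v" using S_def by auto
  define b where "b = Min {x\<in>X. a < x}"
  have ab: "(a,b) \<in> intervals X" "b \<le> v" using succ_interval[OF fin aX v av] b_def by auto
  have "t \<le> b"
  proof (rule ccontr)
    assume "\<not> t \<le> b"
    hence bt: "b < t" by simp
    have "b \<in> X" "a < b" using intervals_memD[OF ab(1)] by auto
    show False
    proof (cases "b < v")
      case True
      hence "b \<in> S" using bt \<open>b \<in> X\<close> S_def by auto
      hence "b \<le> a" using Max_ge[OF fS] a_def by auto
      thus False using \<open>a < b\<close> by simp
    next
      case False
      hence "b = v" using ab(2) by simp
      thus False using bt t by simp
    qed
  qed
  thus ?thesis using ab at by blast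
qed

lemma intervals_sum:
  assumes fin: "finite X" and ne: "X \<noteq> {}"
  shows "(\<Sum>(a,b)\<in>intervals X. b - a) = Max X - Min X"
proof -
  have fI: "finite (intervals X)" using intervals_finite[OF fin] .
  have injf: "inj_on fst (intervals X)"
  proof (rule inj_onI)
    fix x y assume x: "x \<in> intervals X" and y: "y \<in> intervals X" and e: "fst x = fst y"
    obtain a b where xab: "x = (a,b)" by force
    obtain a' b' where yab: "y = (a',b')" by force
    have "a = a'" using e xab yab by simp
    have 1: "a \<in> X \<and> b \<in> X \<and> a < b \<and> (\<forall>x\<in>X. \<not> (a < x \<and> x < b))" using intervals_memD x xab by simp
    have 2: "a' \<in> X \<and> b' \<in> X \<and> a' < b' \<and> (\<forall>x\<in>X. \<not> (a' < x \<and> x < b'))" using intervals_memD y yab by simp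
    have "b = b'" using 1 2 \<open>a = a'\<close> by (metis linorder_neqE_linordered_idom)
    thus "x = y" using xab yab \<open>a = a'\<close> by simp
  qed
  have injs: "inj_on snd (intervals X)"
  proof (rule inj_onI)
    fix x y assume x: "x \<in> intervals X" and y: "y \<in> intervals X" and e: "snd x = snd y"
    obtain a b where xab: "x = (a,b)" by force
    obtain a' b' where yab: "y = (a',b')" by force
    have "b = b'" using e xab yab by simp
    have 1: "a \<in> X \<and> b \<in> X \<and> a < b \<and> (\<forall>x\<in>X. \<not> (a < x \<and> x < b))" using intervals_memD x xab by simp
    have 2: "a' \<in> X \<and> b' \<in> X \<and> a' < b' \<and> (\<forall>x\<in>X. \<not> (a' < x \<and> x < b'))" using intervals_memD y yab by simp
    have "a = a'" using 1 2 \<open>b = b'\<close> by (metis linorder_neqE_linordered_idom)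
    thus "x = y" using xab yab \<open>b = b'\<close> by simp
  qed
  have imf: "fst ` intervals X = X - {Max X}"
  proof
    show "fst ` intervals X \<subseteq> X - {Max X}"
    proof
      fix z assume "z \<in> fst ` intervals X"
      then obtain a b where "(a,b) \<in> intervals X" "z = a" by force
      hence "a \<in> X" "b \<in> X" "a < b" using intervals_memD by auto
      moreover have "b \<le> Max X" using Max_ge[OF fin] \<open>b \<in> X\<close> by simp
      ultimately show "z \<in> X - {Max X}" using \<open>z = a\<close> by auto
    qed
    show "X - {Max X} \<subseteq> fst ` intervals X"
    proof
      fix a assume "a \<in> X - {Max X}"
      hence aX: "a \<in> X" and "a < Max X" using Max_ge[OF fin] by force+
      have "(a, Min {x\<in>X. a < x}) \<in> intervals X"
        using succ_interval(1)[OF fin aX Max_in[OF fin ne] \<open>a < Max X\<close>] .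
      thus "a \<in> fst ` intervals X" by force
    qed
  qed
  have ims: "snd ` intervals X = X - {Min X}"
  proof
    show "snd ` intervals X \<subseteq> X - {Min X}"
    proof
      fix z assume "z \<in> snd ` intervals X"
      then obtain a b where "(a,b) \<in> intervals X" "z = b" by force
      hence "a \<in> X" "b \<in> X" "a < b" using intervals_memD by auto
      moreover have "Min X \<le> a" using Min_le[OF fin] \<open>a \<in> X\<close> by simp
      ultimately show "z \<in> X - {Min X}" using \<open>z = b\<close> by auto
    qed
    show "X - {Min X} \<subseteq> snd ` intervals X"
    proof
      fix b assume "b \<in> X - {Min X}"
      hence bX: "b \<in> X" and mb: "Min X < b" using Min_le[OF fin] by force+
      define S where "S = {x\<in>X. x < b}"
      have fS: "finite S" using fin S_def by simp
      have neS: "S \<noteq> {}" using Min_in[OF fin ne] mb S_def by auto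
      define a where "a = Max S"
      have "a \<in> S" using Max_in[OF fS neS] a_def by simp
      hence "a \<in> X" "a < b" using S_def by auto
      moreover have "\<forall>x\<in>X. \<not> (a < x \<and> x < b)"
        using Max_ge[OF fS] a_def S_def by force
      ultimately have "(a,b) \<in> intervals X" using bX by (intro intervals_memI) auto
      thus "b \<in> snd ` intervals X" by force
    qed
  qed
  have "(\<Sum>(a,b)\<in>intervals X. b - a) = (\<Sum>x\<in>intervals X. snd x) - (\<Sum>x\<in>intervals X. fst x)"
    by (simp add: split_def sum_subtractf)
  also have "(\<Sum>x\<in>intervals X. snd x) = (\<Sum>x\<in>X - {Min X}. x)"
    using sum.reindex[OF injs, of id] ims by simp
  also have "(\<Sum>x\<in>intervals X. fst x) = (\<Sum>x\<in>X - {Max X}. x)"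
    using sum.reindex[OF injf, of id] imf by simp
  also have "(\<Sum>x\<in>X - {Min X}. x) = (\<Sum>x\<in>X. x) - Min X"
    using sum.remove[OF fin Min_in[OF fin ne], of "\<lambda>x. x"] by simp
  also have "(\<Sum>x\<in>X - {Max X}. x) = (\<Sum>x\<in>X. x) - Max X"
    using sum.remove[OF fin Max_in[OF fin ne], of "\<lambda>x. x"] by simp
  finally show ?thesis by simp
qed



lemma intervals_iff: "(u,v) \<in> intervals Y \<longleftrightarrow> u \<in> Y \<and> v \<in> Y \<and> u < v \<and> (\<forall>x\<in>Y. \<not> (u < x \<and> x < v))"
  unfolding intervals_def by auto

lemma intervals_insert_mid:
  assumes ab: "(a,b) \<in> intervals X" and m: "m = (a + b) / 2"
  shows "intervals (insert m X) = insert (a,m) (insert (m,b) (intervals X - {(a,b)}))"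
proof -
  have abX: "a \<in> X" "b \<in> X" "a < b" "\<forall>x\<in>X. \<not> (a < x \<and> x < b)" using ab unfolding intervals_iff by auto
  have am: "a < m" "m < b" using m abX(3) by auto
  show ?thesis
  proof (rule set_eqI)
    fix z :: "real \<times> real"
    obtain u v where z: "z = (u,v)" by force
    have "(u,v) \<in> intervals (insert m X) \<Longrightarrow> (u,v) \<in> insert (a,m) (insert (m,b) (intervals X - {(a,b)}))"
    proof -
      assume "(u,v) \<in> intervals (insert m X)"
      hence uv: "u \<in> insert m X" "v \<in> insert m X" "u < v" "\<forall>x\<in>insert m X. \<not> (u < x \<and> x < v)"
        unfolding intervals_iff by blast+
      show ?thesis
      proof (cases "u = m")
        case True
        hence vX: "v \<in> X" using uv by auto
        have "\<not> v < b"
        proof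
          assume "v < b" hence "a < v \<and> v < b" using am uv(3) True by linarith
          thus False using abX(4) vX by blast
        qed
        moreover have "\<not> b < v"
        proof
          assume "b < v" hence "u < b \<and> b < v" using am True by linarith
          thus False using uv(4) abX(2) by blast
        qed
        ultimately have "v = b" by linarith
        thus ?thesis using True by simp
      next
        case um: False
        show ?thesis
        proof (cases "v = m")
          case True
          hence uX: "u \<in> X" using uv um by auto
          have "\<not> a < u"
          proof
            assume "a < u" hence "a < u \<and> u < b" using am uv(3) True by linarith
            thus False using abX(4) uX by blast
          qed
          moreover have "\<not> u < a"
          proof
            assume "u < a" hence "u < a \<and> a < v" using am True by linarith
            thus False using uv(4) abX(1) by blast
          qed
          ultimately have "u = a" by linarith
          thus ?thesis using True by simp
        next
          case False
          hence uvX: "u \<in> X" "v \<in> X" using uv um by auto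
          have "(u,v) \<noteq> (a,b)"
          proof
            assume "(u,v) = (a,b)" hence "u < m \<and> m < v" using am by simp
            thus False using uv(4) by blast
          qed
          moreover have "(u,v) \<in> intervals X" unfolding intervals_iff using uvX uv(3,4) by blast
          ultimately show ?thesis by blast
        qed
      qed
    qed
    moreover have "(u,v) \<in> insert (a,m) (insert (m,b) (intervals X - {(a,b)})) \<Longrightarrow> (u,v) \<in> intervals (insert m X)"
    proof -
      assume h: "(u,v) \<in> insert (a,m) (insert (m,b) (intervals X - {(a,b)}))"
      show ?thesis
      proof (cases "(u,v) = (a,m)")
        case True
        have "\<forall>x\<in>insert m X. \<not> (a < x \<and> x < m)" using abX(4) am by force
        thus ?thesis using True abX am unfolding intervals_iff by auto
      next
        case F1: False
        show ?thesis
        proof (cases "(u,v) = (m,b)")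
          case True
          have "\<forall>x\<in>insert m X. \<not> (m < x \<and> x < b)" using abX(4) am by force
          thus ?thesis using True abX am unfolding intervals_iff by auto
        next
          case False
          hence uvI: "(u,v) \<in> intervals X" "(u,v) \<noteq> (a,b)" using h F1 by auto
          hence uv: "u \<in> X" "v \<in> X" "u < v" "\<forall>x\<in>X. \<not> (u < x \<and> x < v)" unfolding intervals_iff by blast+
          have "\<not> (u < m \<and> m < v)"
          proof
            assume um: "u < m \<and> m < v"
            have "\<not> (a < u \<and> u < b)" using abX(4) uv(1) by blast
            hence "u \<le> a" using um am by linarith
            have "\<not> (a < v \<and> v < b)" using abX(4) uv(2) by blast
            hence "b \<le> v" using um am by linarith
            have "\<not> (u < a \<and> a < v)" using uv(4) abX(1) by blast
            hence "u = a" using \<open>u \<le> a\<close> \<open>b \<le> v\<close> abX(3) by linarith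
            have "\<not> (u < b \<and> b < v)" using uv(4) abX(2) by blast
            hence "v = b" using \<open>u \<le> a\<close> \<open>b \<le> v\<close> abX(3) by linarith
            show False using uvI(2) \<open>u = a\<close> \<open>v = b\<close> by simp
          qed
          hence "\<forall>x\<in>insert m X. \<not> (u < x \<and> x < v)" using uv(4) by blast
          thus ?thesis using uv unfolding intervals_iff by blast
        qed
      qed
    qed
    ultimately show "z \<in> intervals (insert m X) \<longleftrightarrow> z \<in> insert (a,m) (insert (m,b) (intervals X - {(a,b)}))"
      using z by blast
  qed
qed



definition gg :: "real \<Rightarrow> real \<Rightarrow> nat" where
  "gg lam x = (if x \<le> lam then 0 else 2 ^ nat \<lceil>log 2 (x / lam)\<rceil> - 1)"

lemma gg_split:
  assumes l: "lam > 0" and x: "x > lam"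
  shows "gg lam x = 2 * gg lam (x / 2) + 1"
proof -
  define L where "L = log 2 (x / lam)"
  have xl: "x / lam > 1" using l x by simp
  have Lp: "L > 0" using xl L_def by simp
  have L2: "log 2 (x / 2 / lam) = L - 1"
  proof -
    have "log 2 (x / 2 / lam) = log 2 ((x/lam) / 2)" by (simp add: field_simps)
    also have "\<dots> = log 2 (x/lam) - log 2 2" using xl by (subst log_divide) auto
    finally show ?thesis unfolding L_def by simp
  qed
  define k where "k = \<lceil>L\<rceil>"
  have k1: "k \<ge> 1" using Lp k_def by linarith
  have ck: "\<lceil>L - 1\<rceil> = k - 1" using k_def by (metis ceiling_diff_one)
  have gx: "gg lam x = 2 ^ nat k - 1" using x unfolding gg_def L_def k_def by simp
  show ?thesis
  proof (cases "x / 2 \<le> lam")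
    case True
    hence "x / lam \<le> 2" using l by (simp add: field_simps)
    hence "L \<le> 1" unfolding L_def using xl by simp
    hence "k = 1" using k1 k_def by linarith
    thus ?thesis using gx True unfolding gg_def by simp
  next
    case False
    hence "x / 2 / lam > 1" using l by (simp add: field_simps)
    hence "log 2 (x / 2 / lam) > 0" by simp
    hence "L - 1 > 0" using L2 by simp
    hence k2: "k \<ge> 2" using ck by linarith
    have g2: "gg lam (x/2) = 2 ^ nat (k - 1) - 1" using False L2 ck unfolding gg_def by simp
    have "nat k = Suc (nat (k - 1))" using k2 by linarith
    define P where "P = (2::nat) ^ nat (k - 1)"
    have P1: "P \<ge> 1" unfolding P_def by simp
    have "gg lam x = 2 * P - 1" using gx \<open>nat k = Suc (nat (k - 1))\<close> unfolding P_def by simp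
    moreover have "gg lam (x/2) = P - 1" using g2 P_def by simp
    ultimately show ?thesis using P1 by linarith
  qed
qed

definition Phi :: "real \<Rightarrow> 'p set \<Rightarrow> 'p partition_state \<Rightarrow> nat" where
  "Phi lam Trip Q = (\<Sum>p\<in>Trip. \<Sum>ab\<in>intervals (Q p). gg lam (snd ab - fst ab))"

lemma Phi_subdivide:
  fixes Q :: "'a partition_state"
  assumes fT: "finite Trip" and p: "p \<in> Trip" and ab: "(a,b) \<in> intervals (Q p)"
    and fQ: "finite (Q p)" and l: "lam > 0" and big: "b - a > lam"
  shows "Phi lam Trip (subdivide Q (p,(a,b))) + 1 = Phi lam Trip Q"
proof -
  define m where "m = (a + b) / 2"
  define S where "S = intervals (Q p)"
  have abX: "a \<in> Q p" "b \<in> Q p" "a < b" "\<forall>x\<in>Q p. \<not> (a < x \<and> x < b)" using ab unfolding intervals_iff by auto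
  have mX: "m \<notin> Q p" using abX m_def by force
  have sub: "subdivide Q (p,(a,b)) = Q(p := insert m (Q p))" unfolding subdivide_def m_def by simp
  have fS: "finite S" unfolding S_def
    by (rule finite_subset[OF _ finite_cartesian_product[OF fQ fQ]]) (auto simp: intervals_iff)
  have ins: "intervals (insert m (Q p)) = insert (a,m) (insert (m,b) (S - {(a,b)}))"
    using intervals_insert_mid[OF ab m_def] S_def by simp
  have n1: "(a,m) \<notin> insert (m,b) (S - {(a,b)})" using abX m_def by (auto simp: S_def intervals_iff)
  have n2: "(m,b) \<notin> S - {(a,b)}" using mX by (auto simp: S_def intervals_iff)
  have hm: "m - a = (b - a) / 2" "b - m = (b - a) / 2" using m_def by auto
  have "(\<Sum>ab\<in>intervals (insert m (Q p)). gg lam (snd ab - fst ab)) + 1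
        = gg lam ((b-a)/2) + gg lam ((b-a)/2) + (\<Sum>ab\<in>S - {(a,b)}. gg lam (snd ab - fst ab)) + 1"
  proof -
    have fR: "finite (insert (m,b) (S - {(a,b)}))" "finite (S - {(a,b)})" using fS by auto
    show ?thesis unfolding ins sum.insert[OF fR(1) n1] sum.insert[OF fR(2) n2] by (simp only: snd_conv fst_conv hm)
  qed
  also have "\<dots> = gg lam (b - a) + (\<Sum>ab\<in>S - {(a,b)}. gg lam (snd ab - fst ab))"
    using gg_split[OF l big] by simp
  also have "\<dots> = (\<Sum>ab\<in>S. gg lam (snd ab - fst ab))"
    using sum.remove[OF fS ab[folded S_def], of "\<lambda>ab. gg lam (snd ab - fst ab)"] by simp
  finally have kp: "(\<Sum>ab\<in>intervals (insert m (Q p)). gg lam (snd ab - fst ab)) + 1 = (\<Sum>ab\<in>S. gg lam (snd ab - fst ab))" .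
  define F where "F = (\<lambda>(R::'a partition_state) p. \<Sum>ab\<in>intervals (R p). gg lam (snd ab - fst ab))"
  have "Phi lam Trip (Q(p := insert m (Q p))) = F (Q(p := insert m (Q p))) p + (\<Sum>q\<in>Trip - {p}. F (Q(p := insert m (Q p))) q)"
    unfolding Phi_def F_def by (rule sum.remove[OF fT p])
  also have "(\<Sum>q\<in>Trip - {p}. F (Q(p := insert m (Q p))) q) = (\<Sum>q\<in>Trip - {p}. F Q q)"
    by (rule sum.cong) (auto simp: F_def)
  finally have e1: "Phi lam Trip (Q(p := insert m (Q p))) = F (Q(p := insert m (Q p))) p + (\<Sum>q\<in>Trip - {p}. F Q q)" .
  have e2: "F (Q(p := insert m (Q p))) p = (\<Sum>ab\<in>intervals (insert m (Q p)). gg lam (snd ab - fst ab))"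
    by (simp add: F_def)
  have e3a: "(\<Sum>q\<in>Trip. F Q q) = F Q p + (\<Sum>q\<in>Trip - {p}. F Q q)" by (rule sum.remove[OF fT p])
  have e3b: "Phi lam Trip Q = (\<Sum>q\<in>Trip. F Q q)" unfolding Phi_def F_def by simp
  have e3: "Phi lam Trip Q = F Q p + (\<Sum>q\<in>Trip - {p}. F Q q)" using e3a e3b by simp
  have e4: "F Q p = (\<Sum>ab\<in>S. gg lam (snd ab - fst ab))" by (simp add: F_def S_def)
  show ?thesis unfolding sub e1 e2 e3 e4 kp[symmetric] by simp
qed





lemma energy_grad:
  fixes Dist :: "'p \<Rightarrow> real \<Rightarrow> real^'n \<Rightarrow> real" and Obj :: "real^'n \<Rightarrow> real"
    and Pen :: "real \<Rightarrow> real"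
  assumes fT: "finite Trip" and T: "T > 0"
    and A_D: "\<forall>p\<in>Trip. \<exists>D'. (\<forall>x. ((\<lambda>(t,y). Dist p t y) has_derivative blinfun_apply (D' x)) (at x)) \<and> (\<forall>x. isCont D' x)"
    and A_P: "\<exists>P'. (\<forall>x>0. (Pen has_derivative blinfun_apply (P' x)) (at x)) \<and> (\<forall>x>0. isCont P' x)"
    and A_O: "\<exists>O'. \<forall>x. (Obj has_derivative blinfun_apply (O' x)) (at x)"
    and feas: "\<forall>p\<in>Trip. \<forall>t\<in>{0..T}. Dist p t \<theta> > d0"
  shows "\<exists>K. \<forall>Q. (\<forall>p\<in>Trip. is_partition T (Q p)) \<longrightarrow>
     (energy Obj Pen Dist Trip d0 \<mu> Q has_derivative (\<lambda>h. grad (energy Obj Pen Dist Trip d0 \<mu> Q) \<theta> \<bullet> h)) (at \<theta>)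
     \<and> norm (grad (energy Obj Pen Dist Trip d0 \<mu> Q) \<theta>) \<le> K"
proof -
  obtain DD where DD: "\<forall>p\<in>Trip. (\<forall>x. ((\<lambda>(t,y). Dist p t y) has_derivative blinfun_apply (DD p x)) (at x)) \<and> (\<forall>x. isCont (DD p) x)"
    using bchoice[OF A_D] by blast
  obtain P' where P': "\<forall>x>0. (Pen has_derivative blinfun_apply (P' x)) (at x)" "\<forall>x>0. isCont P' x"
    using A_P by blast
  obtain O' where O': "\<forall>x. (Obj has_derivative blinfun_apply (O' x)) (at x)" using A_O by blast
  have partial: "((\<lambda>y. Dist p t y) has_derivative (\<lambda>h. blinfun_apply (DD p (t,\<theta>)) (0,h))) (at \<theta>)"
    if p: "p \<in> Trip" for p t
  proof -
    have l: "((\<lambda>y. (t,y)) has_derivative (\<lambda>h. (0,h))) (at \<theta>)"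
      by (auto intro!: derivative_eq_intros)
    have "((\<lambda>(t,y). Dist p t y) has_derivative blinfun_apply (DD p (t,\<theta>))) (at (t,\<theta>))"
      using DD p by blast
    from has_derivative_compose[OF l this] show ?thesis by simp
  qed
  have contD: "isCont (\<lambda>t. Dist p t \<theta>) t" if p: "p \<in> Trip" for p t
  proof -
    have "isCont (\<lambda>(t,y). Dist p t y) (t,\<theta>)"
      using DD p has_derivative_continuous by blast
    moreover have "isCont (\<lambda>t. (t,\<theta>)) t" by (intro continuous_intros)
    ultimately show ?thesis using isCont_o2[where f="\<lambda>t. (t,\<theta>)" and a=t and g="\<lambda>(t,y). Dist p t y"] by simp
  qed
  have dterm: "((\<lambda>y. Pen (Dist p t y - d0)) has_derivative
       (\<lambda>h. blinfun_apply (P' (Dist p t \<theta> - d0)) (blinfun_apply (DD p (t,\<theta>)) (0,h)))) (at \<theta>)"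
    if p: "p \<in> Trip" and t: "t \<in> {0..T}" for p t
  proof -
    have "((\<lambda>y. Dist p t y - d0) has_derivative (\<lambda>h. blinfun_apply (DD p (t,\<theta>)) (0,h) - 0)) (at \<theta>)"
      by (rule has_derivative_diff[OF partial[OF p] has_derivative_const])
    hence a: "((\<lambda>y. Dist p t y - d0) has_derivative (\<lambda>h. blinfun_apply (DD p (t,\<theta>)) (0,h))) (at \<theta>)" by simp
    have "Dist p t \<theta> - d0 > 0" using feas p t by auto
    hence b: "(Pen has_derivative blinfun_apply (P' (Dist p t \<theta> - d0))) (at (Dist p t \<theta> - d0))" using P'(1) by blast
    show ?thesis using has_derivative_compose[OF a b] .
  qed
  define f where "f = (\<lambda>p t. norm (P' (Dist p t \<theta> - d0)) * norm (DD p (t,\<theta>)))"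
  have fbd: "bounded (\<Union>p\<in>Trip. f p ` {0..T})"
  proof (rule bounded_UN[OF fT], rule ballI)
    fix p assume p: "p \<in> Trip"
    have "isCont (f p) t" if t: "t \<in> {0..T}" for t
    proof -
      have "Dist p t \<theta> - d0 > 0" using feas p t by auto
      hence c1: "isCont P' (Dist p t \<theta> - d0)" using P'(2) by blast
      have c0: "isCont (\<lambda>t. Dist p t \<theta> - d0) t" using contD[OF p] by (intro continuous_intros)
      have c2: "isCont (\<lambda>t. P' (Dist p t \<theta> - d0)) t" using isCont_o2[OF c0 c1] .
      have c3: "isCont (DD p) (t,\<theta>)" using DD p by blast
      have "isCont (\<lambda>t. (t,\<theta>)) t" by (intro continuous_intros)
      hence c4: "isCont (\<lambda>t. DD p (t,\<theta>)) t" using isCont_o2[where f="\<lambda>t. (t,\<theta>)" and a=t and g="DD p"] c3 by simp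
      show ?thesis unfolding f_def using c2 c4 by (intro continuous_intros)
    qed
    hence "continuous_on {0..T} (f p)" by (intro continuous_at_imp_continuous_on) auto
    thus "bounded (f p ` {0..T})" by (intro compact_imp_bounded compact_continuous_image) auto
  qed
  then obtain C0 where C0: "\<forall>x\<in>(\<Union>p\<in>Trip. f p ` {0..T}). norm x \<le> C0" unfolding bounded_iff by blast
  define C where "C = max C0 0"
  have C1: "C \<ge> 0" by (simp add: C_def)
  have C2: "f p t \<le> C" if pt: "p \<in> Trip" "t \<in> {0..T}" for p t
  proof -
    have "f p t \<in> (\<Union>p\<in>Trip. f p ` {0..T})" using pt by blast
    hence "\<bar>f p t\<bar> \<le> C0" using C0 by (metis real_norm_def)
    thus ?thesis unfolding C_def using abs_ge_self[of "f p t"] by (simp add: le_max_iff_disj)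
  qed
  note C = C1 C2
  define K where "K = norm (O' \<theta>) + \<bar>\<mu>\<bar> * (real (card Trip) * (C * T))"
  have K0: "K \<ge> 0" unfolding K_def using C T by simp
  show ?thesis
  proof (intro exI[of _ K] allI impI)
    fix Q :: "'p partition_state"
    assume Qp: "\<forall>p\<in>Trip. is_partition T (Q p)"
    define E where "E = energy Obj Pen Dist Trip d0 \<mu> Q"
    have midT: "(fst ab + snd ab) / 2 \<in> {0..T}" "snd ab - fst ab > 0" "fst ab \<in> Q p" "snd ab \<in> Q p"
      if "p \<in> Trip" "ab \<in> intervals (Q p)" for p ab
    proof -
      obtain a b where ab: "ab = (a,b)" by force
      have "a \<in> Q p" "b \<in> Q p" "a < b" using that ab intervals_iff by auto
      moreover have "Q p \<subseteq> {0..T}" using Qp that unfolding is_partition_def by auto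
      ultimately show "(fst ab + snd ab) / 2 \<in> {0..T}" "snd ab - fst ab > 0" "fst ab \<in> Q p" "snd ab \<in> Q p"
        using ab by auto
    qed
    define E' where "E' = (\<lambda>h. blinfun_apply (O' \<theta>) h + \<mu> * (\<Sum>p\<in>Trip. \<Sum>ab\<in>intervals (Q p).
        (snd ab - fst ab) * blinfun_apply (P' (Dist p ((fst ab + snd ab) / 2) \<theta> - d0))
           (blinfun_apply (DD p ((fst ab + snd ab) / 2,\<theta>)) (0,h))))"
    have Eeq: "E = (\<lambda>y. Obj y + \<mu> * (\<Sum>p\<in>Trip. \<Sum>ab\<in>intervals (Q p).
        (snd ab - fst ab) * Pen (Dist p ((fst ab + snd ab) / 2) y - d0)))"
      unfolding E_def energy_def by (simp add: split_def)
    have sd: "((\<lambda>y. \<Sum>p\<in>Trip. \<Sum>ab\<in>intervals (Q p).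
        (snd ab - fst ab) * Pen (Dist p ((fst ab + snd ab) / 2) y - d0)) has_derivative
        (\<lambda>h. \<Sum>p\<in>Trip. \<Sum>ab\<in>intervals (Q p).
        (snd ab - fst ab) * blinfun_apply (P' (Dist p ((fst ab + snd ab) / 2) \<theta> - d0))
           (blinfun_apply (DD p ((fst ab + snd ab) / 2,\<theta>)) (0,h)))) (at \<theta>)"
    proof (rule has_derivative_sum)
      fix p assume p: "p \<in> Trip"
      show "((\<lambda>y. \<Sum>ab\<in>intervals (Q p).
        (snd ab - fst ab) * Pen (Dist p ((fst ab + snd ab) / 2) y - d0)) has_derivative
        (\<lambda>h. \<Sum>ab\<in>intervals (Q p).
        (snd ab - fst ab) * blinfun_apply (P' (Dist p ((fst ab + snd ab) / 2) \<theta> - d0))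
           (blinfun_apply (DD p ((fst ab + snd ab) / 2,\<theta>)) (0,h)))) (at \<theta>)"
      proof (rule has_derivative_sum)
        fix ab assume ab: "ab \<in> intervals (Q p)"
        show "((\<lambda>y. (snd ab - fst ab) * Pen (Dist p ((fst ab + snd ab) / 2) y - d0)) has_derivative
          (\<lambda>h. (snd ab - fst ab) * blinfun_apply (P' (Dist p ((fst ab + snd ab) / 2) \<theta> - d0))
           (blinfun_apply (DD p ((fst ab + snd ab) / 2,\<theta>)) (0,h)))) (at \<theta>)"
          by (rule has_derivative_mult_right[OF dterm[OF p midT(1)[OF p ab]]])
      qed
    qed
    have ED: "(E has_derivative E') (at \<theta>)"
      unfolding Eeq E'_def by (rule has_derivative_add[OF O'[rule_format] has_derivative_mult_right[OF sd]])
    note gp = grad_props[OF ED]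
    have E'bd: "\<bar>E' h\<bar> \<le> K * norm h" for h
    proof -
      have tb: "\<bar>(snd ab - fst ab) * blinfun_apply (P' (Dist p ((fst ab + snd ab) / 2) \<theta> - d0))
           (blinfun_apply (DD p ((fst ab + snd ab) / 2,\<theta>)) (0,h))\<bar> \<le> (snd ab - fst ab) * (C * norm h)"
        if p: "p \<in> Trip" and ab: "ab \<in> intervals (Q p)" for p ab
      proof -
        define t where "t = (fst ab + snd ab) / 2"
        have t: "t \<in> {0..T}" using midT[OF p ab] t_def by simp
        have "\<bar>blinfun_apply (P' (Dist p t \<theta> - d0)) (blinfun_apply (DD p (t,\<theta>)) (0,h))\<bar>
              \<le> norm (P' (Dist p t \<theta> - d0)) * norm (blinfun_apply (DD p (t,\<theta>)) (0,h))"
          using norm_blinfun[of "P' (Dist p t \<theta> - d0)"] by (metis real_norm_def)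
        also have "\<dots> \<le> norm (P' (Dist p t \<theta> - d0)) * (norm (DD p (t,\<theta>)) * norm h)"
          using norm_blinfun[of "DD p (t,\<theta>)" "(0,h)"] by (intro mult_left_mono) (auto simp: norm_Pair)
        also have "\<dots> = f p t * norm h" unfolding f_def by simp
        also have "\<dots> \<le> C * norm h" using C(2)[OF p t] by (intro mult_right_mono) auto
        finally have "\<bar>blinfun_apply (P' (Dist p t \<theta> - d0)) (blinfun_apply (DD p (t,\<theta>)) (0,h))\<bar> \<le> C * norm h" .
        moreover have "snd ab - fst ab > 0" using midT[OF p ab] by simp
        ultimately show ?thesis unfolding t_def by (simp add: abs_mult mult_left_mono)
      qed
      have sb: "(\<Sum>ab\<in>intervals (Q p). snd ab - fst ab) \<le> T" if p: "p \<in> Trip" for p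
      proof -
        have pp: "finite (Q p)" "0 \<in> Q p" "T \<in> Q p" "Q p \<subseteq> {0..T}" using Qp p unfolding is_partition_def by auto
        have ne: "Q p \<noteq> {}" using pp by auto
        have "(\<Sum>ab\<in>intervals (Q p). snd ab - fst ab) = Max (Q p) - Min (Q p)"
          using intervals_sum[OF pp(1) ne] by (simp add: split_def)
        moreover have "Max (Q p) \<le> T" using pp ne by auto
        moreover have "Min (Q p) \<ge> 0" using pp ne by auto
        ultimately show ?thesis by simp
      qed
      have "\<bar>\<Sum>p\<in>Trip. \<Sum>ab\<in>intervals (Q p).
        (snd ab - fst ab) * blinfun_apply (P' (Dist p ((fst ab + snd ab) / 2) \<theta> - d0))
           (blinfun_apply (DD p ((fst ab + snd ab) / 2,\<theta>)) (0,h))\<bar>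
        \<le> (\<Sum>p\<in>Trip. \<Sum>ab\<in>intervals (Q p). (snd ab - fst ab) * (C * norm h))"
        by (rule order_trans[OF sum_abs], rule sum_mono, rule order_trans[OF sum_abs], rule sum_mono, rule tb) auto
      also have "\<dots> = (\<Sum>p\<in>Trip. (\<Sum>ab\<in>intervals (Q p). snd ab - fst ab) * (C * norm h))"
        by (simp add: sum_distrib_right)
      also have "\<dots> \<le> (\<Sum>p\<in>Trip. T * (C * norm h))"
        using sb C(1) by (intro sum_mono mult_right_mono) auto
      also have "\<dots> = real (card Trip) * (C * T) * norm h" by simp
      finally have s: "\<bar>\<Sum>p\<in>Trip. \<Sum>ab\<in>intervals (Q p).
        (snd ab - fst ab) * blinfun_apply (P' (Dist p ((fst ab + snd ab) / 2) \<theta> - d0))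
           (blinfun_apply (DD p ((fst ab + snd ab) / 2,\<theta>)) (0,h))\<bar> \<le> real (card Trip) * (C * T) * norm h" .
      have o: "\<bar>blinfun_apply (O' \<theta>) h\<bar> \<le> norm (O' \<theta>) * norm h"
        using norm_blinfun[of "O' \<theta>" h] by simp
      have "\<bar>E' h\<bar> \<le> \<bar>blinfun_apply (O' \<theta>) h\<bar> + \<bar>\<mu>\<bar> * \<bar>\<Sum>p\<in>Trip. \<Sum>ab\<in>intervals (Q p).
        (snd ab - fst ab) * blinfun_apply (P' (Dist p ((fst ab + snd ab) / 2) \<theta> - d0))
           (blinfun_apply (DD p ((fst ab + snd ab) / 2,\<theta>)) (0,h))\<bar>"
        unfolding E'_def by (simp add: abs_mult[symmetric] abs_triangle_ineq)
      also have "\<dots> \<le> norm (O' \<theta>) * norm h + \<bar>\<mu>\<bar> * (real (card Trip) * (C * T) * norm h)"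
        using o s by (intro add_mono mult_left_mono) auto
      also have "\<dots> = K * norm h" unfolding K_def by (simp add: algebra_simps)
      finally show ?thesis .
    qed
    have "norm (grad E \<theta>) \<le> K"
    proof (cases "grad E \<theta> = 0")
      case True thus ?thesis using K0 by simp
    next
      case False
      have "norm (grad E \<theta>) * norm (grad E \<theta>) = grad E \<theta> \<bullet> grad E \<theta>" by (simp add: dot_square_norm power2_eq_square)
      also have "\<dots> = E' (grad E \<theta>)" using gp(2) by simp
      also have "\<dots> \<le> K * norm (grad E \<theta>)" using E'bd[of "grad E \<theta>"] by simp
      finally show ?thesis using False by (simp add: mult_le_cancel_right)
    qed
    thus "(energy Obj Pen Dist Trip d0 \<mu> Q has_derivative (\<lambda>h. grad (energy Obj Pen Dist Trip d0 \<mu> Q) \<theta> \<bullet> h)) (at \<theta>)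
     \<and> norm (grad (energy Obj Pen Dist Trip d0 \<mu> Q) \<theta>) \<le> K"
      using gp(1) unfolding E_def by simp
  qed
qed



lemma finite_pos_common:
  assumes "finite S" "\<forall>p\<in>S. \<exists>x>0. P p x" "\<forall>p x y. P p x \<longrightarrow> 0 < y \<longrightarrow> y \<le> x \<longrightarrow> P p y"
  shows "\<exists>x>(0::real). \<forall>p\<in>S. P p x"
  using assms
proof (induction S rule: finite_induct)
  case empty thus ?case by (intro exI[of _ 1]) auto
next
  case (insert q S)
  then obtain x1 where x1: "x1 > 0" "\<forall>p\<in>S. P p x1" by auto
  obtain x2 where x2: "x2 > 0" "P q x2" using insert.prems by auto
  show ?case
  proof (intro exI[of _ "min x1 x2"] conjI ballI)
    show "min x1 x2 > 0" using x1 x2 by simp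
    fix p assume "p \<in> insert q S"
    thus "P p (min x1 x2)" using x1 x2 insert.prems(2) by (metis insertE min.cobounded1 min.cobounded2 min_less_iff_conj)
  qed
qed

lemma feas_nbhd_one:
  fixes Dist :: "real \<Rightarrow> real^'n \<Rightarrow> real"
  assumes T: "T \<ge> 0" and cont: "continuous_on UNIV (\<lambda>z. Dist (fst z) (snd z))"
    and feas: "\<forall>t\<in>{0..T}. Dist t \<theta> > d0"
  shows "\<exists>\<delta>>0. \<exists>\<rho>>0. \<forall>y. dist y \<theta> < \<rho> \<longrightarrow> (\<forall>t\<in>{0..T}. Dist t y \<ge> d0 + \<delta>)"
proof -
  define Sc where "Sc = {0..T} \<times> cball \<theta> 1"
  have cSc: "compact Sc" unfolding Sc_def by (intro compact_Times) auto
  have uc: "uniformly_continuous_on Sc (\<lambda>z. Dist (fst z) (snd z))"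
    by (rule compact_uniformly_continuous[OF continuous_on_subset[OF cont] cSc]) auto
  have c1: "continuous_on {0..T} (\<lambda>t. Dist t \<theta>)"
    by (rule continuous_on_compose2[OF cont, of _ "\<lambda>t. (t,\<theta>)", simplified]) (auto intro!: continuous_intros)
  obtain ts where ts: "ts \<in> {0..T}" "\<forall>t\<in>{0..T}. Dist ts \<theta> \<le> Dist t \<theta>"
    using continuous_attains_inf[OF compact_Icc _ c1] T by auto
  define \<delta> where "\<delta> = (Dist ts \<theta> - d0) / 2"
  have "Dist ts \<theta> > d0" using feas ts(1) by blast
  hence dpos: "\<delta> > 0" unfolding \<delta>_def by simp
  obtain r where r: "r > 0" "\<forall>x\<in>Sc. \<forall>x'\<in>Sc. dist x' x < r \<longrightarrow> dist (Dist (fst x') (snd x')) (Dist (fst x) (snd x)) < \<delta>"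
    using uc dpos unfolding uniformly_continuous_on_def by metis
  have main: "\<forall>y. dist y \<theta> < min r 1 \<longrightarrow> (\<forall>t\<in>{0..T}. Dist t y \<ge> d0 + \<delta>)"
  proof (intro allI impI ballI)
    fix y t assume y: "dist y \<theta> < min r 1" and t: "t \<in> {0..T}"
    have in1: "(t,y) \<in> Sc" "(t,\<theta>) \<in> Sc" using y t unfolding Sc_def by (auto simp: dist_commute)
    have "dist (t,y) (t,\<theta>) = dist y \<theta>" by (simp add: dist_Pair_Pair)
    hence "dist (t,y) (t,\<theta>) < r" using y by simp
    hence "dist (Dist t y) (Dist t \<theta>) < \<delta>" using r(2) in1 by fastforce
    hence "Dist t y > Dist t \<theta> - \<delta>" by (simp add: dist_real_def)
    moreover have "Dist t \<theta> \<ge> Dist ts \<theta>" using ts t by blast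
    ultimately show "Dist t y \<ge> d0 + \<delta>" using \<delta>_def by argo
  qed
  moreover have "min r 1 > 0" using r by simp
  ultimately show ?thesis using dpos by blast
qed

lemma feas_nbhd:
  fixes Dist :: "'p \<Rightarrow> real \<Rightarrow> real^'n \<Rightarrow> real"
  assumes fT: "finite Trip" and T: "T \<ge> 0"
    and cont: "\<forall>p\<in>Trip. continuous_on UNIV (\<lambda>z. Dist p (fst z) (snd z))"
    and feas: "\<forall>p\<in>Trip. \<forall>t\<in>{0..T}. Dist p t \<theta> > d0"
  shows "\<exists>\<delta>>0. \<exists>\<rho>>0. \<forall>y. dist y \<theta> < \<rho> \<longrightarrow> (\<forall>p\<in>Trip. \<forall>t\<in>{0..T}. Dist p t y \<ge> d0 + \<delta>)"
proof -
  have ex1: "\<forall>p\<in>Trip. \<exists>\<delta>>0. \<exists>\<rho>>0. \<forall>y. dist y \<theta> < \<rho> \<longrightarrow> (\<forall>t\<in>{0..T}. Dist p t y \<ge> d0 + \<delta>)"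
    using feas_nbhd_one[OF T] cont feas by blast
  have mono1: "\<forall>p x y. (\<exists>\<rho>>0. \<forall>z. dist z \<theta> < \<rho> \<longrightarrow> (\<forall>t\<in>{0..T}. Dist p t z \<ge> d0 + x)) \<longrightarrow> 0 < y \<longrightarrow> y \<le> x
      \<longrightarrow> (\<exists>\<rho>>0. \<forall>z. dist z \<theta> < \<rho> \<longrightarrow> (\<forall>t\<in>{0..T}. Dist p t z \<ge> d0 + y))"
  proof (intro allI impI)
    fix p x y assume a: "\<exists>\<rho>>0. \<forall>z. dist z \<theta> < \<rho> \<longrightarrow> (\<forall>t\<in>{0..T}. Dist p t z \<ge> d0 + x)" "y \<le> x"
    then obtain \<rho> where r: "\<rho> > 0" "\<forall>z. dist z \<theta> < \<rho> \<longrightarrow> (\<forall>t\<in>{0..T}. Dist p t z \<ge> d0 + x)" by blast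
    have "\<forall>z. dist z \<theta> < \<rho> \<longrightarrow> (\<forall>t\<in>{0..T}. Dist p t z \<ge> d0 + y)"
    proof (intro allI impI ballI)
      fix z t assume "dist z \<theta> < \<rho>" "t \<in> {0..T}"
      hence "Dist p t z \<ge> d0 + x" using r(2) by blast
      thus "Dist p t z \<ge> d0 + y" using a(2) by linarith
    qed
    thus "\<exists>\<rho>>0. \<forall>z. dist z \<theta> < \<rho> \<longrightarrow> (\<forall>t\<in>{0..T}. Dist p t z \<ge> d0 + y)" using r(1) by blast
  qed
  obtain \<delta> where d: "\<delta> > 0" "\<forall>p\<in>Trip. \<exists>\<rho>>0. \<forall>y. dist y \<theta> < \<rho> \<longrightarrow> (\<forall>t\<in>{0..T}. Dist p t y \<ge> d0 + \<delta>)"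
    using finite_pos_common[OF fT ex1 mono1] by blast
  have mono2: "\<forall>p x y. (\<forall>z. dist z \<theta> < x \<longrightarrow> (\<forall>t\<in>{0..T}. Dist p t z \<ge> d0 + \<delta>)) \<longrightarrow> 0 < y \<longrightarrow> y \<le> x
      \<longrightarrow> (\<forall>z. dist z \<theta> < y \<longrightarrow> (\<forall>t\<in>{0..T}. Dist p t z \<ge> d0 + \<delta>))"
    by force
  obtain \<rho> where r: "\<rho> > 0" "\<forall>p\<in>Trip. \<forall>y. dist y \<theta> < \<rho> \<longrightarrow> (\<forall>t\<in>{0..T}. Dist p t y \<ge> d0 + \<delta>)"
    using finite_pos_common[OF fT d(2) mono2] by blast
  show ?thesis using d(1) r by blast
qed



lemma ls_step_D:
  assumes "ls_step Obj Pen Dist Trip d0 L1 L2 \<eta> M c \<gamma> \<mu> \<theta> (Q,\<epsilon>,\<alpha>,d) sub (Q',\<epsilon>',\<alpha>',d')"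
  shows "(sub \<and> (\<exists>tp\<in>unsafe_tuples Dist Trip d0 L1 L2 \<eta> Q (\<theta> + \<alpha> *\<^sub>R d). \<alpha> \<le> \<epsilon> \<and> Q' = subdivide Q tp \<and>
            \<epsilon>' = \<gamma> * \<epsilon> \<and> \<alpha>' = \<alpha> \<and> d' \<in> directions M (energy Obj Pen Dist Trip d0 \<mu> (subdivide Q tp)) \<theta>))
       \<or> (\<not> sub \<and> Q' = Q \<and> \<epsilon>' = \<epsilon> \<and> \<alpha>' = \<gamma> * \<alpha> \<and> d' = d \<and>
            (unsafe_tuples Dist Trip d0 L1 L2 \<eta> Q (\<theta> + \<alpha> *\<^sub>R d) \<noteq> {} \<longrightarrow> \<not> \<alpha> \<le> \<epsilon>) \<and>
            (unsafe_tuples Dist Trip d0 L1 L2 \<eta> Q (\<theta> + \<alpha> *\<^sub>R d) = {} \<longrightarrow> \<not> wolfe (energy Obj Pen Dist Trip d0 \<mu> Q) c \<theta> d \<alpha>))"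
  using assms unfolding ls_step_def ls_continue_def by auto

lemma count_unbounded:
  assumes inf: "infinite {j::nat. P j}"
  shows "\<exists>m. card {j. N \<le> j \<and> j < m \<and> P j} \<ge> K"
proof (induction K)
  case 0 thus ?case by simp
next
  case (Suc K)
  then obtain m where m: "card {j. N \<le> j \<and> j < m \<and> P j} \<ge> K" by blast
  obtain m' where m': "P m'" "m' \<ge> max m N" using inf unfolding infinite_nat_iff_unbounded_le by blast
  have sub: "insert m' {j. N \<le> j \<and> j < m \<and> P j} \<subseteq> {j. N \<le> j \<and> j < Suc m' \<and> P j}" using m' by auto
  have nm: "m' \<notin> {j. N \<le> j \<and> j < m \<and> P j}" using m' by auto
  have "card (insert m' {j. N \<le> j \<and> j < m \<and> P j}) \<le> card {j. N \<le> j \<and> j < Suc m' \<and> P j}"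
    by (rule card_mono[OF _ sub]) auto
  moreover have "card (insert m' {j. N \<le> j \<and> j < m \<and> P j}) = Suc (card {j. N \<le> j \<and> j < m \<and> P j})"
    using nm by simp
  ultimately show ?case using m by (intro exI[of _ "Suc m'"]) simp
qed

lemma card_lessSuc: "card {j. j < Suc m \<and> P j} = card {j. j < m \<and> P j} + (if P m then 1 else 0)"
proof -
  have "{j. j < Suc m \<and> P j} = (if P m then insert m {j. j < m \<and> P j} else {j. j < m \<and> P j})"
    by (auto simp: less_Suc_eq)
  thus ?thesis by auto
qed

lemma card_rangeSuc: "card {j. N \<le> j \<and> j < Suc m \<and> P j} = card {j. N \<le> j \<and> j < m \<and> P j} + (if P m \<and> N \<le> m then 1 else 0)"
proof -
  have "{j. N \<le> j \<and> j < Suc m \<and> P j} = (if P m \<and> N \<le> m then insert m {j. N \<le> j \<and> j < m \<and> P j} else {j. N \<le> j \<and> j < m \<and> P j})"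
    by (auto simp: less_Suc_eq)
  thus ?thesis by auto
qed



lemma subdivide_partition:
  assumes Qp: "\<forall>p\<in>Trip. is_partition T (Q p)"
    and tp: "tp \<in> unsafe_tuples Dist Trip d0 L1 L2 \<eta> Q y"
  shows "\<forall>p\<in>Trip. is_partition T (subdivide Q tp p)"
proof -
  obtain p0 a b where tpe: "tp = (p0,(a,b))" by (metis prod.exhaust)
  have p0: "p0 \<in> Trip" and ab: "(a,b) \<in> intervals (Q p0)" using tp tpe unfolding unsafe_tuples_def by auto
  have "a \<in> Q p0" "b \<in> Q p0" using ab intervals_iff by auto
  moreover have "Q p0 \<subseteq> {0..T}" using Qp p0 unfolding is_partition_def by auto
  ultimately have "a \<in> {0..T}" "b \<in> {0..T}" by auto
  hence m: "(a+b)/2 \<in> {0..T}" by auto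
  show ?thesis
  proof
    fix p assume p: "p \<in> Trip"
    show "is_partition T (subdivide Q tp p)"
    proof (cases "p = p0")
      case True
      thus ?thesis using Qp p m unfolding subdivide_def tpe is_partition_def by auto
    next
      case False
      thus ?thesis using Qp p unfolding subdivide_def tpe by auto
    qed
  qed
qed

lemma no_inf_run:
  fixes Dist :: "'p \<Rightarrow> real \<Rightarrow> real^'n \<Rightarrow> real" and Obj :: "real^'n \<Rightarrow> real" and Pen :: "real \<Rightarrow> real"
    and M :: "real^'n^'n \<Rightarrow> real^'n^'n"
  assumes fT: "finite Trip" and gam: "0 < \<gamma>" "\<gamma> < 1" and a0: "\<alpha>0 > 0" and e0: "\<epsilon> > 0"
    and Qp: "\<forall>p\<in>Trip. is_partition T (Q p)"
    and dd: "d \<in> directions M (energy Obj Pen Dist Trip d0 \<mu> Q) \<theta>"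
    and GK: "\<forall>Q. (\<forall>p\<in>Trip. is_partition T (Q p)) \<longrightarrow>
     (energy Obj Pen Dist Trip d0 \<mu> Q has_derivative (\<lambda>h. grad (energy Obj Pen Dist Trip d0 \<mu> Q) \<theta> \<bullet> h)) (at \<theta>)
     \<and> norm (grad (energy Obj Pen Dist Trip d0 \<mu> Q) \<theta>) \<le> K"
    and Mb: "\<forall>H x. \<beta>l * (x \<bullet> x) \<le> x \<bullet> (M H *v x)" and bl: "0 < \<beta>l" and c: "c < 1"
    and nb: "\<rho> > 0" "\<forall>y. dist y \<theta> < \<rho> \<longrightarrow> (\<forall>p\<in>Trip. \<forall>t\<in>{0..T}. Dist p t y \<ge> d0 + \<delta>)"
    and lam: "lam > 0" "\<forall>x. 0 < x \<longrightarrow> psi L1 L2 \<eta> x \<ge> \<delta> \<longrightarrow> x > lam"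
  shows "\<not> (\<exists>s sub. s 0 = (Q, \<epsilon>, \<alpha>0, d) \<and>
            (\<forall>n. ls_step Obj Pen Dist Trip d0 L1 L2 \<eta> M c \<gamma> \<mu> \<theta> (s n) (sub n) (s (Suc n))))"
proof
  assume "\<exists>s sub. s 0 = (Q, \<epsilon>, \<alpha>0, d) \<and>
            (\<forall>n. ls_step Obj Pen Dist Trip d0 L1 L2 \<eta> M c \<gamma> \<mu> \<theta> (s n) (sub n) (s (Suc n)))"
  then obtain s sub where s0: "s 0 = (Q, \<epsilon>, \<alpha>0, d)"
    and st: "\<forall>n. ls_step Obj Pen Dist Trip d0 L1 L2 \<eta> M c \<gamma> \<mu> \<theta> (s n) (sub n) (s (Suc n))" by blast
  define E where "E = energy Obj Pen Dist Trip d0 \<mu>"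
  define U where "U = unsafe_tuples Dist Trip d0 L1 L2 \<eta>"
  define Qn where "Qn n = fst (s n)" for n
  define en where "en n = fst (snd (s n))" for n
  define an where "an n = fst (snd (snd (s n)))" for n
  define dn where "dn n = snd (snd (snd (s n)))" for n
  have sn: "s n = (Qn n, en n, an n, dn n)" for n by (simp add: Qn_def en_def an_def dn_def)
  have D: "(sub n \<and> (\<exists>tp\<in>U (Qn n) (\<theta> + an n *\<^sub>R dn n). an n \<le> en n \<and> Qn (Suc n) = subdivide (Qn n) tp \<and>
            en (Suc n) = \<gamma> * en n \<and> an (Suc n) = an n \<and> dn (Suc n) \<in> directions M (E (subdivide (Qn n) tp)) \<theta>))
       \<or> (\<not> sub n \<and> Qn (Suc n) = Qn n \<and> en (Suc n) = en n \<and> an (Suc n) = \<gamma> * an n \<and> dn (Suc n) = dn n \<and>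
            (U (Qn n) (\<theta> + an n *\<^sub>R dn n) \<noteq> {} \<longrightarrow> \<not> an n \<le> en n) \<and>
            (U (Qn n) (\<theta> + an n *\<^sub>R dn n) = {} \<longrightarrow> \<not> wolfe (E (Qn n)) c \<theta> (dn n) (an n)))" for n
    using ls_step_D[of Obj Pen Dist Trip d0 L1 L2 \<eta> M c \<gamma> \<mu> \<theta> "Qn n" "en n" "an n" "dn n" "sub n"
        "Qn (Suc n)" "en (Suc n)" "an (Suc n)" "dn (Suc n)"] st sn unfolding E_def U_def by metis
  have inv: "(\<forall>p\<in>Trip. is_partition T (Qn n p)) \<and> en n > 0 \<and> an n > 0 \<and> dn n \<in> directions M (E (Qn n)) \<theta>" for n
  proof (induction n)
    case 0 thus ?case using s0 sn[of 0] Qp e0 a0 dd unfolding E_def by simp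
  next
    case (Suc n)
    from D[of n] show ?case
    proof
      assume "sub n \<and> (\<exists>tp\<in>U (Qn n) (\<theta> + an n *\<^sub>R dn n). an n \<le> en n \<and> Qn (Suc n) = subdivide (Qn n) tp \<and>
            en (Suc n) = \<gamma> * en n \<and> an (Suc n) = an n \<and> dn (Suc n) \<in> directions M (E (subdivide (Qn n) tp)) \<theta>)"
      then obtain tp where tp: "tp \<in> U (Qn n) (\<theta> + an n *\<^sub>R dn n)" "Qn (Suc n) = subdivide (Qn n) tp"
            "en (Suc n) = \<gamma> * en n" "an (Suc n) = an n" "dn (Suc n) \<in> directions M (E (subdivide (Qn n) tp)) \<theta>" by blast
      have "\<forall>p\<in>Trip. is_partition T (Qn (Suc n) p)"
        using subdivide_partition[OF _ tp(1)[unfolded U_def]] Suc.IH tp(2) by simp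
      thus ?case using tp Suc.IH gam by simp
    next
      assume h: "\<not> sub n \<and> Qn (Suc n) = Qn n \<and> en (Suc n) = en n \<and> an (Suc n) = \<gamma> * an n \<and> dn (Suc n) = dn n \<and>
            (U (Qn n) (\<theta> + an n *\<^sub>R dn n) \<noteq> {} \<longrightarrow> \<not> an n \<le> en n) \<and>
            (U (Qn n) (\<theta> + an n *\<^sub>R dn n) = {} \<longrightarrow> \<not> wolfe (E (Qn n)) c \<theta> (dn n) (an n))"
      thus ?case using Suc.IH gam by simp
    qed
  qed
  define B where "B = K + K / \<beta>l"
  have Bd: "norm (dn n) \<le> B" for n
  proof -
    have "norm (grad (E (Qn n)) \<theta>) \<le> K" using GK inv[of n] unfolding E_def by blast
    thus ?thesis using dir_props(1)[OF Mb bl _ ] inv[of n] unfolding B_def by blast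
  qed
  have B0: "B \<ge> 0" using Bd[of 0] norm_ge_zero order_trans by blast
  have amono: "an (Suc n) \<le> an n" for n
    using D[of n] inv[of n] gam by (auto simp: mult_le_cancel_right1)
  have amono': "an n \<le> an m" if "m \<le> n" for m n
    using lift_Suc_antimono_le[of an, OF amono that] .
  show False
  proof (cases "finite {n. sub n}")
    case True
    then obtain N0 where N0: "\<forall>n\<in>{n. sub n}. n \<le> N0" using finite_nat_set_iff_bounded_le by blast
    define N where "N = Suc N0"
    have nsub: "\<not> sub n" if "n \<ge> N" for n using N0 that N_def by auto
    have fixk: "Qn (N+k) = Qn N \<and> en (N+k) = en N \<and> dn (N+k) = dn N \<and> an (N+k) = \<gamma>^k * an N" for k
    proof (induction k)
      case 0 thus ?case by simp
    next
      case (Suc k)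
      have "\<not> sub (N+k)" using nsub by simp
      thus ?case using D[of "N+k"] Suc.IH by auto
    qed
    define g where "g = grad (E (Qn N)) \<theta>"
    have gd: "(E (Qn N) has_derivative (\<lambda>h. g \<bullet> h)) (at \<theta>)" "norm g \<le> K"
      using GK inv[of N] unfolding g_def E_def by blast+
    have desc: "dn N \<noteq> 0 \<Longrightarrow> dn N \<bullet> g < 0" using dir_props(2)[OF Mb bl _ gd(2)[unfolded g_def]] inv[of N] g_def by blast
    obtain a1 where a1: "a1 > 0" "\<forall>\<alpha>. 0 < \<alpha> \<longrightarrow> \<alpha> < a1 \<longrightarrow> E (Qn N) (\<theta> + \<alpha> *\<^sub>R dn N) \<le> E (Qn N) \<theta> + c * ((\<alpha> *\<^sub>R dn N) \<bullet> g)"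
      using wolfe_small[OF gd(1) desc c] by blast
    define y where "y = min a1 (en N) / an N"
    have ypos: "y > 0" using a1 inv[of N] y_def by simp
    obtain k where k: "\<gamma>^k < y" using real_arch_pow_inv[OF ypos gam(2)] by blast
    define \<alpha> where "\<alpha> = \<gamma>^k * an N"
    have al: "\<alpha> < min a1 (en N)" using k inv[of N] unfolding \<alpha>_def y_def by (simp add: pos_less_divide_eq)
    have apos: "\<alpha> > 0" using inv[of N] gam unfolding \<alpha>_def by simp
    have w: "wolfe (E (Qn N)) c \<theta> (dn N) \<alpha>" unfolding wolfe_def g_def[symmetric] using a1(2) apos al by simp
    have fk: "Qn (N+k) = Qn N" "en (N+k) = en N" "dn (N+k) = dn N" "an (N+k) = \<alpha>" using fixk[of k] \<alpha>_def by auto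
    have "\<not> sub (N+k)" using nsub by simp
    hence h: "(U (Qn N) (\<theta> + \<alpha> *\<^sub>R dn N) \<noteq> {} \<longrightarrow> \<not> \<alpha> \<le> en N) \<and>
            (U (Qn N) (\<theta> + \<alpha> *\<^sub>R dn N) = {} \<longrightarrow> \<not> wolfe (E (Qn N)) c \<theta> (dn N) \<alpha>)"
      using D[of "N+k"] fk by auto
    show False using h w al by auto
  next
    case False
    have ebound: "en m \<le> en 0 * \<gamma>^(card {j. j < m \<and> sub j})" for m
    proof (induction m)
      case 0 thus ?case by simp
    next
      case (Suc m)
      show ?case
      proof (cases "sub m")
        case True
        hence "en (Suc m) = \<gamma> * en m" using D[of m] by auto
        also have "\<dots> \<le> \<gamma> * (en 0 * \<gamma>^(card {j. j < m \<and> sub j}))" using Suc.IH gam by simp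
        also have "\<dots> = en 0 * \<gamma>^(card {j. j < Suc m \<and> sub j})" using True by (simp add: card_lessSuc)
        finally show ?thesis .
      next
        case F: False
        hence "en (Suc m) = en m" using D[of m] by auto
        thus ?thesis using Suc.IH F by (simp add: card_lessSuc)
      qed
    qed
    have ainv: "(\<exists>j<n. sub j) \<longrightarrow> an n \<le> en n / \<gamma>" for n
    proof (induction n)
      case 0 thus ?case by simp
    next
      case (Suc n)
      show ?case
      proof (cases "sub n")
        case True
        hence "an (Suc n) = an n \<and> en (Suc n) = \<gamma> * en n \<and> an n \<le> en n" using D[of n] by auto
        thus ?thesis using gam by simp
      next
        case F: False
        hence h: "an (Suc n) = \<gamma> * an n \<and> en (Suc n) = en n" using D[of n] by auto
        show ?thesis
        proof
          assume "\<exists>j<Suc n. sub j"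
          hence "\<exists>j<n. sub j" using F less_Suc_eq by auto
          hence "an n \<le> en n / \<gamma>" using Suc.IH by blast
          moreover have "\<gamma> * an n \<le> an n" using gam inv[of n] by (simp add: mult_le_cancel_right1)
          ultimately show "an (Suc n) \<le> en (Suc n) / \<gamma>" using h by simp
        qed
      qed
    qed
    define e where "e = \<rho> / (B + 1)"
    have epos: "e > 0" using nb(1) B0 e_def by simp
    have "e / en 0 > 0" using epos inv[of 0] by simp
    then obtain K' where K': "\<gamma>^K' < e / en 0" using real_arch_pow_inv gam(2) by blast
    obtain m where m: "card {j. 0 \<le> j \<and> j < m \<and> sub j} \<ge> Suc K'" using count_unbounded[OF False] by blast
    have cm: "card {j. j < m \<and> sub j} \<ge> Suc K'" using m by simp
    hence "{j. j < m \<and> sub j} \<noteq> {}" by (metis card.empty not_less_eq_eq zero_le)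
    hence "\<exists>j<m. sub j" by auto
    hence "an m \<le> en m / \<gamma>" using ainv by blast
    also have "\<dots> \<le> en 0 * \<gamma>^(card {j. j < m \<and> sub j}) / \<gamma>" using ebound[of m] gam by (simp add: divide_right_mono)
    also have "\<dots> \<le> en 0 * \<gamma>^(Suc K') / \<gamma>"
      using power_decreasing[OF cm, of \<gamma>] gam inv[of 0] by (intro divide_right_mono mult_left_mono) auto
    also have "\<dots> = en 0 * \<gamma>^K'" using gam by simp
    also have "\<dots> < e" using K' inv[of 0] by (simp add: pos_less_divide_eq mult.commute)
    finally have ame: "an m < e" .
    have close: "dist (\<theta> + an n *\<^sub>R dn n) \<theta> < \<rho>" if "n \<ge> m" for n
    proof -
      have "dist (\<theta> + an n *\<^sub>R dn n) \<theta> = an n * norm (dn n)" using inv[of n] by (simp add: dist_norm)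
      also have "\<dots> \<le> e * B" using amono'[OF that] ame inv[of n] Bd[of n] B0
        by (intro mult_mono) auto
      also have "\<dots> < \<rho>" unfolding e_def using nb(1) B0 by (simp add: field_simps)
      finally show ?thesis .
    qed
    have phistep: "Phi lam Trip (Qn (Suc n)) + (if sub n then 1 else 0) = Phi lam Trip (Qn n)" if nm: "n \<ge> m" for n
    proof (cases "sub n")
      case True
      then obtain tp where tp: "tp \<in> U (Qn n) (\<theta> + an n *\<^sub>R dn n)" "Qn (Suc n) = subdivide (Qn n) tp"
        using D[of n] by auto
      obtain p a b where tpe: "tp = (p,(a,b))" by (metis prod.exhaust)
      have p: "p \<in> Trip" and ab: "(a,b) \<in> intervals (Qn n p)"
        and un: "Dist p ((a + b) / 2) (\<theta> + an n *\<^sub>R dn n) \<le> d0 + psi L1 L2 \<eta> (b - a)"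
        using tp(1) tpe unfolding U_def unsafe_tuples_def by auto
      have pp: "is_partition T (Qn n p)" using inv[of n] p by blast
      have "a \<in> Qn n p" "b \<in> Qn n p" "a < b" using ab intervals_iff by auto
      moreover have "Qn n p \<subseteq> {0..T}" using pp unfolding is_partition_def by auto
      ultimately have "a \<in> {0..T}" "b \<in> {0..T}" by auto
      hence mid: "(a+b)/2 \<in> {0..T}" by auto
      have "Dist p ((a + b) / 2) (\<theta> + an n *\<^sub>R dn n) \<ge> d0 + \<delta>" using nb(2) close[OF nm] p mid by blast
      hence "psi L1 L2 \<eta> (b - a) \<ge> \<delta>" using un by simp
      hence big: "b - a > lam" using lam(2) \<open>a < b\<close> by simp
      have fin: "finite (Qn n p)" using pp unfolding is_partition_def by simp
      show ?thesis using Phi_subdivide[where Q="Qn n", OF fT p ab fin lam(1) big] tp(2) tpe True by simp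
    next
      case F: False
      thus ?thesis using D[of n] by auto
    qed
    have phik: "Phi lam Trip (Qn (m+k)) + card {j. m \<le> j \<and> j < m+k \<and> sub j} = Phi lam Trip (Qn m)" for k
    proof (induction k)
      case 0 thus ?case by simp
    next
      case (Suc k)
      have "card {j. m \<le> j \<and> j < Suc (m+k) \<and> sub j} = card {j. m \<le> j \<and> j < m+k \<and> sub j} + (if sub (m+k) then 1 else 0)"
        using card_rangeSuc[of m "m+k" sub] by simp
      thus ?case using phistep[of "m+k"] Suc.IH by simp
    qed
    obtain m2 where m2: "card {j. m \<le> j \<and> j < m2 \<and> sub j} \<ge> Suc (Phi lam Trip (Qn m))"
      using count_unbounded[OF False] by blast
    have "card {j. m \<le> j \<and> j < m2 \<and> sub j} \<le> card {j. m \<le> j \<and> j < m + m2 \<and> sub j}"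
      by (rule card_mono) auto
    thus False using m2 phik[of m2] by linarith
  qed
qed



lemma psi_small:
  assumes L2: "L2 > 0" and eta: "\<eta> > 0" and d: "\<delta> > 0"
  shows "\<exists>lam>0. \<forall>x. 0 < x \<longrightarrow> psi L1 L2 \<eta> x \<ge> \<delta> \<longrightarrow> x > lam"
proof -
  define l1 where "l1 = \<delta> / (\<bar>L1\<bar> + 1)"
  define l2 where "l2 = (\<delta> / (2 * L2)) powr (1 / \<eta>)"
  define lam where "lam = min l1 l2"
  have l1p: "l1 > 0" using d l1_def by simp
  have l2p: "l2 > 0" using d L2 l2_def by simp
  have lp: "lam > 0" using l1p l2p lam_def by simp
  have "psi L1 L2 \<eta> x < \<delta>" if x: "0 < x" "x \<le> lam" for x
  proof -
    have "L1 * x / 2 \<le> \<bar>L1\<bar> * x / 2" using x by (simp add: mult_right_mono)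
    also have "\<dots> \<le> \<bar>L1\<bar> * l1 / 2" using x lam_def by (simp add: mult_left_mono)
    also have "\<dots> < \<delta> / 2"
    proof -
      have "\<bar>L1\<bar> * l1 = \<delta> * (\<bar>L1\<bar> / (\<bar>L1\<bar> + 1))" unfolding l1_def by simp
      also have "\<dots> < \<delta> * 1" using d by (intro mult_strict_left_mono) auto
      finally show ?thesis by simp
    qed
    finally have a: "L1 * x / 2 < \<delta> / 2" .
    have "x powr \<eta> \<le> l2 powr \<eta>" using x lam_def eta by (intro powr_mono2) auto
    also have "\<dots> = \<delta> / (2 * L2)" unfolding l2_def using eta d L2 by (simp add: powr_powr)
    finally have "L2 * x powr \<eta> \<le> L2 * (\<delta> / (2 * L2))" using L2 by (intro mult_left_mono) auto
    also have "\<dots> = \<delta> / 2" using L2 by simp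
    finally show ?thesis unfolding psi_def using a by simp
  qed
  hence "\<forall>x. 0 < x \<longrightarrow> psi L1 L2 \<eta> x \<ge> \<delta> \<longrightarrow> x > lam" by (meson not_le)
  thus ?thesis using lp by blast
qed



lemma abs_mid_le:
  fixes a t b :: real
  assumes "a \<le> t" "t \<le> b"
  shows "\<bar>t - (a+b)/2\<bar> \<le> (b - a) / 2"
proof (cases "t \<le> (a+b)/2")
  case True
  hence "\<bar>t - (a+b)/2\<bar> = (a+b)/2 - t" by simp
  thus ?thesis using assms by (simp add: field_simps)
next
  case False
  hence "\<bar>t - (a+b)/2\<bar> = t - (a+b)/2" by simp
  thus ?thesis using assms by (simp add: field_simps)
qed

theorem corollary1:
  fixes T d0 L1 L2 \<eta> c \<gamma>ls \<alpha>0 \<gamma> \<epsilon>d \<epsilon>\<mu> \<mu>0 \<epsilon>\<alpha>0 \<beta>l \<beta>u :: real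
    and I :: "'i set" and J :: "'i \<Rightarrow> 'j set" and K :: "'k set"
    and b :: "'i \<Rightarrow> real \<Rightarrow> real^'n \<Rightarrow> (real^3) set"
    and bb :: "'i \<Rightarrow> 'j \<Rightarrow> real \<Rightarrow> real^'n \<Rightarrow> (real^3) set"
    and obs :: "(real^3) set" and ok :: "'k \<Rightarrow> (real^3) set"
    and Obj :: "real^'n \<Rightarrow> real" and Pen :: "real \<Rightarrow> real"
    and M :: "real^'n^'n \<Rightarrow> real^'n^'n"
    and \<theta>0 :: "real^'n" and Q0 :: "('i \<times> 'j \<times> 'k) partition_state"
    and \<theta> :: "real^'n" and \<mu> \<epsilon> :: real and Q :: "('i \<times> 'j \<times> 'k) partition_state"
    and d :: "real^'n"
  defines "Dist \<equiv> (\<lambda>(i,j,k) t \<theta>. setdist (bb i j t \<theta>) (ok k))"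
    and "Trip \<equiv> (SIGMA i:I. J i \<times> K)"
  assumes T_pos: "T > 0"
    and fin: "finite I" "\<forall>i\<in>I. finite (J i)" "finite K"
    \<comment> \<open>Assumption 1\<close>
    and decomp_b: "\<forall>i\<in>I. \<forall>t \<theta>. b i t \<theta> = (\<Union>j\<in>J i. bb i j t \<theta>)"
    and decomp_o: "obs = (\<Union>k\<in>K. ok k)"
    and nonempty: "\<forall>i\<in>I. \<forall>j\<in>J i. \<forall>t \<theta>. bb i j t \<theta> \<noteq> {}" "\<forall>k\<in>K. ok k \<noteq> {}"
    and smooth_dist: "\<forall>i\<in>I. \<forall>j\<in>J i. \<forall>k\<in>K.
                        C2_on UNIV (\<lambda>(t, \<theta>). setdist (bb i j t \<theta>) (ok k))"
    \<comment> \<open>Assumption 2\<close>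
    and bounded_feasible: "bounded {\<theta>. \<forall>i\<in>I. \<forall>t\<in>{0..T}. setdist (b i t \<theta>) obs \<ge> d0}"
    \<comment> \<open>Assumption 3\<close>
    and Pen_smooth: "C2_on {0<..} Pen"
    and Pen_mono: "\<forall>x y. 0 < x \<longrightarrow> x \<le> y \<longrightarrow> Pen y \<le> Pen x"
    and Pen_lim0: "filterlim Pen at_top (at_right 0)"
    and Pen_liminf: "(Pen \<longlongrightarrow> 0) at_top"
    and Pen_lim0x: "filterlim (\<lambda>x. x * Pen x) at_top (at_right 0)"
    \<comment> \<open>problem data\<close>
    and d0_nonneg: "d0 \<ge> 0"
    and Obj_smooth: "twice_differentiable_on UNIV Obj"
    and L1: "\<forall>i\<in>I. \<forall>j\<in>J i. \<forall>k\<in>K. \<forall>\<theta>'. \<forall>t1\<in>{0..T}. \<forall>t2\<in>{0..T}.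
               \<bar>setdist (bb i j t1 \<theta>') (ok k) - setdist (bb i j t2 \<theta>') (ok k)\<bar> \<le> L1 * \<bar>t1 - t2\<bar>"
    and L2_pos: "L2 > 0" and eta_pos: "\<eta> > 0"
    and M_bounds: "0 < \<beta>l" "\<beta>l \<le> \<beta>u"
        "\<forall>H x. \<beta>l * (x \<bullet> x) \<le> x \<bullet> (M H *v x) \<and> x \<bullet> (M H *v x) \<le> \<beta>u * (x \<bullet> x)"
    and c: "0 < c" "c < 1"
    and alpha0: "\<alpha>0 > 0"
    and gamma_ls: "0 < \<gamma>ls" "\<gamma>ls < 1"
    and gamma: "0 < \<gamma>" "\<gamma> < 1"
    and mu0: "\<mu>0 > 0"
    and eps: "\<epsilon>\<alpha>0 > 0" "\<epsilon>d > 0" "\<epsilon>\<mu> > 0"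
    \<comment> \<open>feasible (strictly, so that the penalized objective is finite) initial parameter\<close>
    and feasible0: "\<forall>i\<in>I. \<forall>t\<in>{0..T}. setdist (b i t \<theta>0) obs > d0"
    and Q0_part: "\<forall>p\<in>Trip. is_partition T (Q0 p)"
    \<comment> \<open>a Line-Search call made by Algorithm 1 with arguments (theta, d, eps_alpha)\<close>
    and call: "alg_reach Obj Pen Dist Trip d0 L1 L2 \<eta> M c \<gamma>ls \<alpha>0 \<gamma> \<epsilon>d \<epsilon>\<mu> \<theta>0 \<mu>0 Q0 \<epsilon>\<alpha>0
                 (Inner \<theta> \<mu> Q \<epsilon> d)"
    and call_d: "infnorm d > \<epsilon>d"
  shows "(\<forall>s sub. s 0 = (Q, \<epsilon>, \<alpha>0, d) \<and>
            (\<forall>n. ls_step Obj Pen Dist Trip d0 L1 L2 \<eta> M c \<gamma>ls \<mu> \<theta> (s n) (sub n) (s (Suc n)))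
            \<longrightarrow> finite {n. sub n})
       \<and> \<not> (\<exists>s sub. s 0 = (Q, \<epsilon>, \<alpha>0, d) \<and>
            (\<forall>n. ls_step Obj Pen Dist Trip d0 L1 L2 \<eta> M c \<gamma>ls \<mu> \<theta> (s n) (sub n) (s (Suc n))))"
proof -
  have fT: "finite Trip" unfolding Trip_def using fin by (intro finite_SigmaI) auto
  have pD: "\<And>p. p \<in> Trip \<Longrightarrow> \<exists>i j k. p = (i,j,k) \<and> i \<in> I \<and> j \<in> J i \<and> k \<in> K" unfolding Trip_def by auto
  have Dist_eq: "(\<lambda>(t,y). Dist (i,j,k) t y) = (\<lambda>(t, \<theta>). setdist (bb i j t \<theta>) (ok k))" for i j k
    unfolding Dist_def by simp
  have A_D: "\<forall>p\<in>Trip. \<exists>D'. (\<forall>x. ((\<lambda>(t,y). Dist p t y) has_derivative blinfun_apply (D' x)) (at x)) \<and> (\<forall>x. isCont D' x)"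
  proof
    fix p assume "p \<in> Trip"
    then obtain i j k where p: "p = (i,j,k)" "i \<in> I" "j \<in> J i" "k \<in> K" using pD by blast
    have "C2_on UNIV (\<lambda>(t, \<theta>). setdist (bb i j t \<theta>) (ok k))" using smooth_dist p by blast
    then obtain f' f'' where f: "\<forall>x. ((\<lambda>(t, \<theta>). setdist (bb i j t \<theta>) (ok k)) has_derivative blinfun_apply (f' x)) (at x)"
      "\<forall>x. (f' has_derivative blinfun_apply (f'' x)) (at x)"
      unfolding C2_on_def by blast
    have "\<forall>x. isCont f' x" using f(2) has_derivative_continuous by blast
    thus "\<exists>D'. (\<forall>x. ((\<lambda>(t,y). Dist p t y) has_derivative blinfun_apply (D' x)) (at x)) \<and> (\<forall>x. isCont D' x)"
      using f(1) Dist_eq p(1) by metis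
  qed
  have A_P: "\<exists>P'. (\<forall>x>0. (Pen has_derivative blinfun_apply (P' x)) (at x)) \<and> (\<forall>x>0. isCont P' x)"
  proof -
    obtain f' f'' where f: "\<forall>x\<in>{0<..}. (Pen has_derivative blinfun_apply (f' x)) (at x)"
      "\<forall>x\<in>{0<..}. (f' has_derivative blinfun_apply (f'' x)) (at x)"
      using Pen_smooth unfolding C2_on_def by blast
    have "\<forall>x>0. isCont f' x"
    proof (intro allI impI)
      fix x :: real assume "x > 0"
      hence "x \<in> {0<..}" by simp
      thus "isCont f' x" using f(2) has_derivative_continuous by blast
    qed
    thus ?thesis using f(1) by auto
  qed
  have A_O: "\<exists>O'. \<forall>x. (Obj has_derivative blinfun_apply (O' x)) (at x)"
    using Obj_smooth unfolding twice_differentiable_on_def by blast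
  have contD: "\<forall>p\<in>Trip. continuous_on UNIV (\<lambda>z. Dist p (fst z) (snd z))"
  proof
    fix p assume "p \<in> Trip"
    then obtain D' where "\<forall>x. ((\<lambda>(t,y). Dist p t y) has_derivative blinfun_apply (D' x)) (at x)" using A_D by blast
    hence "\<forall>x. isCont (\<lambda>(t,y). Dist p t y) x" using has_derivative_continuous by blast
    hence "continuous_on UNIV (\<lambda>(t,y). Dist p t y)" by (intro continuous_at_imp_continuous_on) auto
    thus "continuous_on UNIV (\<lambda>z. Dist p (fst z) (snd z))" by (simp add: split_def)
  qed
  have LD: "\<bar>Dist p t1 y - Dist p t2 y\<bar> \<le> L1 * \<bar>t1 - t2\<bar>"
    if pT: "p \<in> Trip" and tt: "t1 \<in> {0..T}" "t2 \<in> {0..T}" for p t1 t2 y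
  proof -
    obtain i j k where p: "p = (i,j,k)" "i \<in> I" "j \<in> J i" "k \<in> K" using pD pT by blast
    show ?thesis using L1 p tt unfolding Dist_def by simp
  qed
  have L1nn: "L1 \<ge> 0" if "p \<in> Trip" for p
  proof -
    have "0 \<le> L1 * \<bar>0 - T\<bar>" using LD[OF that, of 0 T] T_pos by (meson abs_ge_zero atLeastAtMost_iff order_trans order_refl less_imp_le)
    thus ?thesis using T_pos by (simp add: zero_le_mult_iff)
  qed
  define feasS where "feasS \<theta>' \<longleftrightarrow> (\<forall>p\<in>Trip. \<forall>t\<in>{0..T}. Dist p t \<theta>' > d0)" for \<theta>'
  define Qpart where "Qpart Q' \<longleftrightarrow> (\<forall>p\<in>Trip. is_partition T (Q' p))" for Q' :: "('i \<times> 'j \<times> 'k) partition_state"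
  define Inv where "Inv st = (case st of Outer \<theta>' \<mu>' Q' \<epsilon>' \<Rightarrow> Qpart Q' \<and> feasS \<theta>' \<and> \<epsilon>' > 0
      | Inner \<theta>' \<mu>' Q' \<epsilon>' d' \<Rightarrow> Qpart Q' \<and> feasS \<theta>' \<and> \<epsilon>' > 0 \<and>
            d' \<in> directions M (energy Obj Pen Dist Trip d0 \<mu>' Q') \<theta>')" for st :: "('i \<times> 'j \<times> 'k, 'n) alg_state"
  have feas_step: "feasS (\<theta>' + \<alpha>' *\<^sub>R d')"
    if Qp: "Qpart Q'" and un: "unsafe_tuples Dist Trip d0 L1 L2 \<eta> Q' (\<theta>' + \<alpha>' *\<^sub>R d') = {}" for Q' \<theta>' \<alpha>' d'
  proof -
    define y where "y = \<theta>' + \<alpha>' *\<^sub>R d'"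
    have "Dist p t y > d0" if p: "p \<in> Trip" and t: "t \<in> {0..T}" for p t
    proof -
      have pp: "finite (Q' p)" "0 \<in> Q' p" "T \<in> Q' p" "Q' p \<subseteq> {0..T}" using Qp p unfolding Qpart_def is_partition_def by auto
      have t': "0 \<le> t" "t \<le> T" using t by auto
      obtain aa1 bb1 where ab: "(aa1,bb1) \<in> intervals (Q' p)" "aa1 \<le> t" "t \<le> bb1"
        using intervals_cover[OF pp(1) pp(2) pp(3) T_pos t'] by blast
      have abX: "aa1 \<in> Q' p" "bb1 \<in> Q' p" "aa1 < bb1" using ab(1) intervals_iff by auto
      hence abT: "aa1 \<in> {0..T}" "bb1 \<in> {0..T}" using pp(4) by auto
      have mT: "(aa1+bb1)/2 \<in> {0..T}" using abT by auto
      have "(p,(aa1,bb1)) \<notin> unsafe_tuples Dist Trip d0 L1 L2 \<eta> Q' y" using un y_def by simp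
      hence big: "Dist p ((aa1+bb1)/2) y > d0 + psi L1 L2 \<eta> (bb1 - aa1)" using p ab(1) unfolding unsafe_tuples_def by auto
      have "\<bar>Dist p t y - Dist p ((aa1+bb1)/2) y\<bar> \<le> L1 * \<bar>t - (aa1+bb1)/2\<bar>" using LD[OF p t mT] .
      also have "\<dots> \<le> L1 * ((bb1 - aa1) / 2)"
      proof -
        have "\<bar>t - (aa1+bb1)/2\<bar> \<le> (bb1 - aa1) / 2" using abs_mid_le[OF ab(2,3)] .
        thus ?thesis using L1nn[OF p] by (intro mult_left_mono) auto
      qed
      finally have l: "\<bar>Dist p t y - Dist p ((aa1+bb1)/2) y\<bar> \<le> L1 * ((bb1 - aa1) / 2)" .
      have "(bb1 - aa1) powr \<eta> > 0" using abX by simp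
      hence "L2 * (bb1 - aa1) powr \<eta> > 0" using L2_pos by simp
      thus ?thesis using big l unfolding psi_def by linarith
    qed
    thus ?thesis unfolding feasS_def y_def by blast
  qed
  have ls_inv: "Qpart Q2 \<and> \<epsilon>2 > 0 \<and> d2 \<in> directions M (energy Obj Pen Dist Trip d0 \<mu>' Q2) \<theta>'"
    if r: "(\<lambda>s s'. \<exists>sub. ls_step Obj Pen Dist Trip d0 L1 L2 \<eta> M c \<gamma>ls \<mu>' \<theta>' s sub s')\<^sup>*\<^sup>* (Q1, \<epsilon>1, \<alpha>1, d1) (Q2, \<epsilon>2, \<alpha>2, d2)"
      and i: "Qpart Q1" "\<epsilon>1 > 0" "d1 \<in> directions M (energy Obj Pen Dist Trip d0 \<mu>' Q1) \<theta>'"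
    for \<mu>' \<theta>' Q1 \<epsilon>1 \<alpha>1 d1 Q2 \<epsilon>2 \<alpha>2 d2
  proof -
    have "\<And>st. (\<lambda>s s'. \<exists>sub. ls_step Obj Pen Dist Trip d0 L1 L2 \<eta> M c \<gamma>ls \<mu>' \<theta>' s sub s')\<^sup>*\<^sup>* (Q1, \<epsilon>1, \<alpha>1, d1) st \<Longrightarrow>
        (case st of (Q', \<epsilon>', \<alpha>', d') \<Rightarrow> Qpart Q' \<and> \<epsilon>' > 0 \<and> d' \<in> directions M (energy Obj Pen Dist Trip d0 \<mu>' Q') \<theta>')"
    proof -
      fix st
      assume "(\<lambda>s s'. \<exists>sub. ls_step Obj Pen Dist Trip d0 L1 L2 \<eta> M c \<gamma>ls \<mu>' \<theta>' s sub s')\<^sup>*\<^sup>* (Q1, \<epsilon>1, \<alpha>1, d1) st"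
      thus "case st of (Q', \<epsilon>', \<alpha>', d') \<Rightarrow> Qpart Q' \<and> \<epsilon>' > 0 \<and> d' \<in> directions M (energy Obj Pen Dist Trip d0 \<mu>' Q') \<theta>'"
      proof (induction rule: rtranclp_induct)
        case base thus ?case using i by simp
      next
        case (step y z)
        obtain Qa ea aa da where y: "y = (Qa, ea, aa, da)" by (metis prod.exhaust)
        obtain Qb eb ab db where z: "z = (Qb, eb, ab, db)" by (metis prod.exhaust)
        obtain sub where sstep: "ls_step Obj Pen Dist Trip d0 L1 L2 \<eta> M c \<gamma>ls \<mu>' \<theta>' (Qa, ea, aa, da) sub (Qb, eb, ab, db)"
          using step.hyps(2) y z by blast
        have IH: "Qpart Qa" "ea > 0" "da \<in> directions M (energy Obj Pen Dist Trip d0 \<mu>' Qa) \<theta>'" using step.IH y by auto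
        from ls_step_D[OF sstep] show ?case
        proof
          assume "sub \<and> (\<exists>tp\<in>unsafe_tuples Dist Trip d0 L1 L2 \<eta> Qa (\<theta>' + aa *\<^sub>R da). aa \<le> ea \<and> Qb = subdivide Qa tp \<and>
            eb = \<gamma>ls * ea \<and> ab = aa \<and> db \<in> directions M (energy Obj Pen Dist Trip d0 \<mu>' (subdivide Qa tp)) \<theta>')"
          then obtain tp where tp: "tp \<in> unsafe_tuples Dist Trip d0 L1 L2 \<eta> Qa (\<theta>' + aa *\<^sub>R da)" "Qb = subdivide Qa tp"
            "eb = \<gamma>ls * ea" "db \<in> directions M (energy Obj Pen Dist Trip d0 \<mu>' (subdivide Qa tp)) \<theta>'" by blast
          have "Qpart Qb" using subdivide_partition[OF _ tp(1)] IH(1) tp(2) unfolding Qpart_def by simp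
          thus ?case using z tp IH gamma_ls by simp
        next
          assume "\<not> sub \<and> Qb = Qa \<and> eb = ea \<and> ab = \<gamma>ls * aa \<and> db = da \<and>
            (unsafe_tuples Dist Trip d0 L1 L2 \<eta> Qa (\<theta>' + aa *\<^sub>R da) \<noteq> {} \<longrightarrow> \<not> aa \<le> ea) \<and>
            (unsafe_tuples Dist Trip d0 L1 L2 \<eta> Qa (\<theta>' + aa *\<^sub>R da) = {} \<longrightarrow> \<not> wolfe (energy Obj Pen Dist Trip d0 \<mu>' Qa) c \<theta>' da aa)"
          thus ?case using z IH by simp
        qed
      qed
    qed
    from this[OF r] show ?thesis by simp
  qed
  have feas0: "feasS \<theta>0"
  proof -
    have "Dist p t \<theta>0 > d0" if p: "p \<in> Trip" and t: "t \<in> {0..T}" for p t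
    proof -
      obtain i j k where pe: "p = (i,j,k)" "i \<in> I" "j \<in> J i" "k \<in> K" using pD p by blast
      have "d0 < setdist (b i t \<theta>0) obs" using feasible0 pe t by blast
      also have "\<dots> \<le> setdist (bb i j t \<theta>0) obs"
        using nonempty(1) pe decomp_b by (intro setdist_subset_left) auto
      also have "\<dots> \<le> setdist (bb i j t \<theta>0) (ok k)"
        using nonempty(2) pe decomp_o by (intro setdist_subset_right) auto
      finally show ?thesis unfolding Dist_def pe by simp
    qed
    thus ?thesis unfolding feasS_def by blast
  qed
  have reach_inv: "Inv st" if "alg_reach Obj Pen Dist Trip d0 L1 L2 \<eta> M c \<gamma>ls \<alpha>0 \<gamma> \<epsilon>d \<epsilon>\<mu> \<theta>0 \<mu>0 Q0 \<epsilon>\<alpha>0 st" for st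
    using that
  proof (induction rule: alg_reach.induct)
    case start thus ?case unfolding Inv_def Qpart_def using feas0 Q0_part eps by simp
  next
    case (outer \<theta>' \<mu>' Q' \<epsilon>' d') thus ?case unfolding Inv_def by simp
  next
    case (inner_exit \<theta>' \<mu>' Q' \<epsilon>' d') thus ?case unfolding Inv_def by simp
  next
    case (inner_step \<theta>' \<mu>' Q' \<epsilon>' d' Q'' \<epsilon>'' \<alpha>' d''' d'')
    have i: "Qpart Q'" "feasS \<theta>'" "\<epsilon>' > 0" "d' \<in> directions M (energy Obj Pen Dist Trip d0 \<mu>' Q') \<theta>'"
      using inner_step.IH unfolding Inv_def by auto
    have l: "Qpart Q'' \<and> \<epsilon>'' > 0 \<and> d''' \<in> directions M (energy Obj Pen Dist Trip d0 \<mu>' Q'') \<theta>'"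
      using ls_inv[OF inner_step.hyps(3) i(1) i(3) i(4)] .
    have "unsafe_tuples Dist Trip d0 L1 L2 \<eta> Q'' (\<theta>' + \<alpha>' *\<^sub>R d''') = {}"
      using inner_step.hyps(4) unfolding ls_continue_def by simp
    hence "feasS (\<theta>' + \<alpha>' *\<^sub>R d''')" using feas_step l by blast
    thus ?case unfolding Inv_def using l inner_step.hyps(5) by simp
  qed
  have ci: "Qpart Q" "feasS \<theta>" "\<epsilon> > 0" "d \<in> directions M (energy Obj Pen Dist Trip d0 \<mu> Q) \<theta>"
    using reach_inv[OF call] unfolding Inv_def by auto
  have feasth: "\<forall>p\<in>Trip. \<forall>t\<in>{0..T}. Dist p t \<theta> > d0" using ci(2) unfolding feasS_def .
  obtain KK where GK: "\<forall>Q. (\<forall>p\<in>Trip. is_partition T (Q p)) \<longrightarrow>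
     (energy Obj Pen Dist Trip d0 \<mu> Q has_derivative (\<lambda>h. grad (energy Obj Pen Dist Trip d0 \<mu> Q) \<theta> \<bullet> h)) (at \<theta>)
     \<and> norm (grad (energy Obj Pen Dist Trip d0 \<mu> Q) \<theta>) \<le> KK"
    using energy_grad[OF fT T_pos A_D A_P A_O feasth] by blast
  obtain \<delta> \<rho> where nb: "\<delta> > 0" "\<rho> > 0" "\<forall>y. dist y \<theta> < \<rho> \<longrightarrow> (\<forall>p\<in>Trip. \<forall>t\<in>{0..T}. Dist p t y \<ge> d0 + \<delta>)"
    using feas_nbhd[OF fT _ contD feasth] T_pos by auto
  obtain lam where lam: "lam > 0" "\<forall>x. 0 < x \<longrightarrow> psi L1 L2 \<eta> x \<ge> \<delta> \<longrightarrow> x > lam"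
    using psi_small[OF L2_pos eta_pos nb(1)] by blast
  have Mb: "\<forall>H x. \<beta>l * (x \<bullet> x) \<le> x \<bullet> (M H *v x)" using M_bounds(3) by blast
  have noinf: "\<not> (\<exists>s sub. s 0 = (Q, \<epsilon>, \<alpha>0, d) \<and>
            (\<forall>n. ls_step Obj Pen Dist Trip d0 L1 L2 \<eta> M c \<gamma>ls \<mu> \<theta> (s n) (sub n) (s (Suc n))))"
    using no_inf_run[OF fT gamma_ls alpha0 ci(3) ci(1)[unfolded Qpart_def] ci(4) GK Mb M_bounds(1) c(2) nb(2) nb(3) lam] .
  thus ?thesis by blast
qed


end
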